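(* Let $G=\mathbb{R}\ltimes\mathbb{R}_+=\{(x,y)\mid x\in\mathbb{R},\ y>0\}$ with multiplication $(x_1,y_1)\cdot(x_2,y_2)=(x_1+y_1x_2,\ y_1y_2)$ and identity $\mathrm{id}=(0,1)$. Let $C^+_{\mathrm{id}}\subset T_{\mathrm{id}}G\cong\mathbb{R}^2$ be a non-empty closed convex pointed cone with an anti-norm $\nu_{\mathrm{id}}$, and consider the left-invariant sub-Lorentzian structure on $G$ obtained by left translations, i.e. $C^+_{(x,y)}=\{y\xi\mid\xi\in C^+_{\mathrm{id}}\}$ and $\nu_{(x,y)}(y\xi)=\nu_{\mathrm{id}}(\xi)$. Suppose $C^+_{\mathrm{id}}\cap\{(a,0)\mid a\in\mathbb{R}\}=\{0\}$. Then for every point $p$ reachable from $\mathrm{id}$ by an admissible path, there exists a longest path from $\mathrm{id}$ to $p$.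
   Context: An anti-norm on a closed convex cone $C\subset V$ is an upper semicontinuous function $\nu:V\to\mathbb{R}\sqcup\{-\infty\}$ with $\nu(C)\ge0$, $\nu(V\setminus C)=-\infty$, positively homogeneous of degree 1 and superadditive. A pointed cone has apex $0$ and contains no lines. A Lipschitz path $\gamma:[0,1]\to G$ is admissible if $\dot\gamma(t)\in C^+_{\gamma(t)}$ for a.e. $t$; a longest path from $p_0$ to $p_1$ is an admissible path from $p_0$ to $p_1$ maximizing $\int_0^1\nu_{\gamma(t)}(\dot\gamma(t))\,dt$ among all such admissible paths. *)

theory Defs
  imports "HOL-Analysis.Analysis"
begin

definition G_set :: "(real \<times> real) set" where
  "G_set = {p. snd p > 0}"

definition G_mult :: "real \<times> real \<Rightarrow> real \<times> real \<Rightarrow> real \<times> real" where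
  "G_mult p q = (fst p + snd p * fst q, snd p * snd q)"

definition G_id :: "real \<times> real" where
  "G_id = (0, 1)"

definition usc :: "('v::topological_space \<Rightarrow> ereal) \<Rightarrow> bool" where
  "usc f \<longleftrightarrow> (\<forall>x c. f x < c \<longrightarrow> eventually (\<lambda>y. f y < c) (at x))"

definition pointed_cone :: "'v::real_normed_vector set \<Rightarrow> bool" where
  "pointed_cone C \<longleftrightarrow> C \<noteq> {} \<and> closed C \<and> convex C \<and> cone C \<and>
     (\<forall>v. v \<in> C \<and> - v \<in> C \<longrightarrow> v = 0)"

definition anti_norm :: "'v::real_normed_vector set \<Rightarrow> ('v \<Rightarrow> ereal) \<Rightarrow> bool" where
  "anti_norm C \<nu> \<longleftrightarrow> usc \<nu> \<and> (\<forall>v. \<nu> v \<noteq> \<infinity>) \<and>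
     (\<forall>v\<in>C. \<nu> v \<ge> 0) \<and> (\<forall>v. v \<notin> C \<longrightarrow> \<nu> v = -\<infinity>) \<and>
     (\<forall>c v. c > 0 \<longrightarrow> \<nu> (c *\<^sub>R v) = ereal c * \<nu> v) \<and>
     (\<forall>u v. \<nu> (u + v) \<ge> \<nu> u + \<nu> v)"

definition cone_at :: "(real \<times> real) set \<Rightarrow> real \<times> real \<Rightarrow> (real \<times> real) set" where
  "cone_at C p = {snd p *\<^sub>R \<xi> | \<xi>. \<xi> \<in> C}"

definition nu_at :: "((real \<times> real) \<Rightarrow> ereal) \<Rightarrow> real \<times> real \<Rightarrow> real \<times> real \<Rightarrow> ereal" where
  "nu_at \<nu> p v = \<nu> ((1 / snd p) *\<^sub>R v)"

definition admissible :: "(real \<times> real) set \<Rightarrow> (real \<Rightarrow> real \<times> real) \<Rightarrow> bool" where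
  "admissible C \<gamma> \<longleftrightarrow> (\<exists>L. L-lipschitz_on {0..1} \<gamma>) \<and> (\<forall>t\<in>{0..1}. \<gamma> t \<in> G_set) \<and>
     (AE t in lebesgue. t \<in> {0..1} \<longrightarrow>
        \<gamma> differentiable (at t) \<and> vector_derivative \<gamma> (at t) \<in> cone_at C (\<gamma> t))"

text \<open>Length (the integral of \<nu> along the velocity); nonnegative a.e. for admissible paths.\<close>
definition path_length :: "((real \<times> real) \<Rightarrow> ereal) \<Rightarrow> (real \<Rightarrow> real \<times> real) \<Rightarrow> ennreal" where
  "path_length \<nu> \<gamma> = (\<integral>\<^sup>+ t. e2ennreal (nu_at \<nu> (\<gamma> t) (vector_derivative \<gamma> (at t))) \<partial>lebesgue_on {0..1})"

definition longest_path :: "(real \<times> real) set \<Rightarrow> ((real \<times> real) \<Rightarrow> ereal) \<Rightarrow>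
    real \<times> real \<Rightarrow> real \<times> real \<Rightarrow> (real \<Rightarrow> real \<times> real) \<Rightarrow> bool" where
  "longest_path C \<nu> p0 p1 \<gamma> \<longleftrightarrow> admissible C \<gamma> \<and> \<gamma> 0 = p0 \<and> \<gamma> 1 = p1 \<and>
     (\<forall>\<eta>. admissible C \<eta> \<and> \<eta> 0 = p0 \<and> \<eta> 1 = p1 \<longrightarrow> path_length \<nu> \<eta> \<le> path_length \<nu> \<gamma>)"

end

theory Submission
  imports Defs
begin

lemma seq_at: "filterlim (\<lambda>n. x + inverse (real (Suc n))) (at x) sequentially"
proof -
  have "(\<lambda>n. x + inverse (real (Suc n))) \<longlonglongrightarrow> x + 0"
    by (intro tendsto_add tendsto_const LIMSEQ_inverse_real_of_nat)
  then show ?thesis by (auto simp: filterlim_at)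
qed

lemma quot_lim:
  fixes f :: "real \<Rightarrow> real"
  assumes "(f has_real_derivative D) (at x)"
  shows "(\<lambda>n. (f (x + inverse (real (Suc n))) - f x) / inverse (real (Suc n))) \<longlonglongrightarrow> D"
proof -
  have "((\<lambda>y. (f y - f x) / (y - x)) \<longlongrightarrow> D) (at x)"
    using assms has_field_derivative_iff by blast
  from filterlim_compose[OF this seq_at[of x]] show ?thesis by simp
qed

lemma lipschitz_FTC:
  fixes g g' :: "real \<Rightarrow> real"
  assumes lip: "L-lipschitz_on {0..1} g"
    and der: "AE t in lebesgue. t \<in> {0..1} \<longrightarrow> (g has_real_derivative g' t) (at t)"
  shows "(g' has_integral (g 1 - g 0)) {0..1}"
proof -
  have L0: "0 \<le> L" using lip lipschitz_on_nonneg by blast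
  from der obtain N where N: "N \<in> null_sets lebesgue"
    and NP: "\<And>t. t \<notin> N \<Longrightarrow> t \<in> {0..1} \<Longrightarrow> (g has_real_derivative g' t) (at t)"
    by (auto elim!: AE_E3)
  define E where "E = {0<..<1} - N"
  have negl: "negligible ({0..1} - E)"
  proof -
    have "negligible (N \<union> {0,1})"
      using N by (simp add: negligible_iff_null_sets[symmetric] negligible_finite)
    moreover have "{0..1} - E \<subseteq> N \<union> {0,1}" by (auto simp: E_def)
    ultimately show ?thesis using negligible_subset by blast
  qed
  define gt where "gt t = g (max 0 (min 1 t))" for t
  have gt_lip: "\<bar>gt s - gt t\<bar> \<le> L * \<bar>s - t\<bar>" for s t
  proof -
    have "dist (g (max 0 (min 1 s))) (g (max 0 (min 1 t))) \<le> L * dist (max 0 (min 1 s)) (max 0 (min 1 t))"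
      by (rule lipschitz_onD[OF lip]) auto
    also have "\<dots> \<le> L * \<bar>s - t\<bar>"
      by (rule mult_left_mono[OF _ L0]) (auto simp: dist_real_def)
    finally show ?thesis by (simp add: gt_def dist_real_def)
  qed
  have "L-lipschitz_on UNIV gt"
    by (rule lipschitz_onI) (use gt_lip L0 in \<open>auto simp: dist_real_def\<close>)
  then have gt_cont: "continuous_on A gt" for A
    using lipschitz_on_continuous_on continuous_on_subset by blast
  define P where "P u = integral {-1..u} gt" for u
  have Pd: "(P has_real_derivative gt u) (at u)" if "u \<in> {-1<..<3}" for u
  proof -
    have "(P has_vector_derivative gt u) (at u within {-1..3})"
      unfolding P_def using that by (intro integral_has_vector_derivative gt_cont) auto
    moreover have "at u within {-1..3} = at u"
      using that by (intro at_within_interior) auto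
    ultimately show ?thesis by (simp add: has_real_derivative_iff_has_vector_derivative)
  qed
  define d where "d n = inverse (real (Suc n))" for n
  have d_pos: "0 < d n" and d_le: "d n \<le> 1" for n
    by (auto simp: d_def field_simps)
  define q where "q n t = (gt (t + d n) - gt t) / d n" for n t
  define Q where "Q n t = (P (t + d n) - P t) / d n" for n t
  have Qint: "(q n has_integral (Q n 1 - Q n 0)) {0..1}" for n
  proof (rule fundamental_theorem_of_calculus)
    fix t :: real assume t: "t \<in> {0..1}"
    have "((\<lambda>t. P (t + d n)) has_real_derivative gt (t + d n)) (at t)"
      using Pd[of "t + d n"] t d_pos[of n] d_le[of n] by (subst DERIV_shift[symmetric]) auto
    moreover have "(P has_real_derivative gt t) (at t)"
      using Pd[of t] t by auto
    ultimately have "(Q n has_real_derivative q n t) (at t)"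
      unfolding Q_def q_def by (intro DERIV_cdivide DERIV_diff)
    then show "(Q n has_vector_derivative q n t) (at t within {0..1})"
      by (simp add: has_real_derivative_iff_has_vector_derivative has_vector_derivative_at_within)
  qed simp
  have Q1: "(\<lambda>n. Q n 1) \<longlonglongrightarrow> g 1"
    using quot_lim[OF Pd[of 1]] by (simp add: Q_def d_def gt_def)
  have Q0: "(\<lambda>n. Q n 0) \<longlonglongrightarrow> g 0"
    using quot_lim[OF Pd[of 0]] by (simp add: Q_def d_def gt_def)
  have qconv: "(\<lambda>n. q n t) \<longlonglongrightarrow> g' t" if "t \<in> E" for t
  proof -
    have "(g has_real_derivative g' t) (at t)" using NP that by (auto simp: E_def)
    then have "(gt has_real_derivative g' t) (at t)"
      by (rule has_field_derivative_transform_within_open[where S="{0<..<1}"])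
         (use that in \<open>auto simp: E_def gt_def\<close>)
    from quot_lim[OF this] show ?thesis by (simp add: q_def d_def)
  qed
  define f where "f n t = (if t \<in> E then q n t else 0)" for n t
  define G where "G t = (if t \<in> E then g' t else 0)" for t
  have fint: "(f n has_integral (Q n 1 - Q n 0)) {0..1}" for n
    by (rule has_integral_spike[OF negl _ Qint]) (auto simp: f_def)
  have fbound: "norm (f n t) \<le> L" for n t
  proof -
    have "\<bar>q n t\<bar> \<le> L"
      using gt_lip[of "t + d n" t] d_pos[of n] by (simp add: q_def abs_div divide_le_eq)
    then show ?thesis by (auto simp: f_def L0)
  qed
  have fconv: "(\<lambda>k. f k t) \<longlonglongrightarrow> G t" for t
    using qconv[of t] by (cases "t \<in> E") (auto simp: f_def G_def)
  have fi: "f k integrable_on {0..1}" for k using fint by blast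
  have DC: "G integrable_on {0..1}" "(\<lambda>k. integral {0..1} (f k)) \<longlonglongrightarrow> integral {0..1} G"
    using dominated_convergence[where h="\<lambda>_. L" and f=f and g=G and S="{0..1}", OF fi integrable_const_ivl fbound fconv]
    by auto
  have "(\<lambda>k. integral {0..1} (f k)) \<longlonglongrightarrow> g 1 - g 0"
  proof -
    have "integral {0..1} (f k) = Q k 1 - Q k 0" for k using fint integral_unique by blast
    then show ?thesis using tendsto_diff[OF Q1 Q0] by simp
  qed
  with DC have "integral {0..1} G = g 1 - g 0" using LIMSEQ_unique by blast
  with DC have "(G has_integral g 1 - g 0) {0..1}" by (metis has_integral_integral)
  then show ?thesis
    by (rule has_integral_spike[OF negl, rotated]) (auto simp: G_def)
qed


locale LS =
  fixes C :: "(real \<times> real) set" and \<nu> :: "real \<times> real \<Rightarrow> ereal" and \<sigma> :: real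
  assumes pc: "pointed_cone C" and an: "anti_norm C \<nu>"
    and hor: "C \<inter> {(a, 0) | a. True} = {0}"
    and sig: "\<sigma> = 1 \<or> \<sigma> = -1" and sgn: "\<And>\<xi>. \<xi> \<in> C \<Longrightarrow> 0 \<le> \<sigma> * snd \<xi>"
begin

definition D where "D = {u. (u, \<sigma>) \<in> C}"
definition \<phi> where "\<phi> u = real_of_ereal (\<nu> (u, \<sigma>))"

lemma sig2: "\<sigma> * \<sigma> = 1" using sig by auto
lemma sig_ne: "\<sigma> \<noteq> 0" using sig by auto

lemma C_closed: "closed C" and C_conv: "convex C" and C_cone: "cone C" and C_ne: "C \<noteq> {}"
  using pc by (auto simp: pointed_cone_def)

lemma C_scale: "\<xi> \<in> C \<Longrightarrow> 0 \<le> c \<Longrightarrow> c *\<^sub>R \<xi> \<in> C"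
  using C_cone by (auto simp: cone_def)

lemma zero_C: "0 \<in> C"
  using C_ne C_scale[of _ 0] by auto

lemma C_hor: "\<xi> \<in> C \<Longrightarrow> snd \<xi> = 0 \<Longrightarrow> \<xi> = 0"
  using hor by (cases \<xi>) auto

lemma nu_props: "usc \<nu>" "\<And>v. \<nu> v \<noteq> \<infinity>" "\<And>v. v \<in> C \<Longrightarrow> \<nu> v \<ge> 0"
   "\<And>v. v \<notin> C \<Longrightarrow> \<nu> v = -\<infinity>" "\<And>c v. c > 0 \<Longrightarrow> \<nu> (c *\<^sub>R v) = ereal c * \<nu> v"
  using an by (auto simp: anti_norm_def)

lemma nu_real: "\<xi> \<in> C \<Longrightarrow> \<nu> \<xi> = ereal (real_of_ereal (\<nu> \<xi>))"
  using nu_props(2)[of \<xi>] nu_props(3)[of \<xi>] by (cases "\<nu> \<xi>") auto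

lemma nu_zero: "\<nu> 0 = 0"
proof -
  have "\<nu> ((2::real) *\<^sub>R 0) = ereal 2 * \<nu> 0" by (rule nu_props(5)) auto
  then have e: "\<nu> 0 = ereal 2 * \<nu> 0" by simp
  define a where "a = real_of_ereal (\<nu> 0)"
  have "\<nu> 0 = ereal a" using nu_real zero_C by (simp add: a_def)
  with e have "ereal a = ereal (2 * a)" by simp
  then have "a = 0" by simp
  with \<open>\<nu> 0 = ereal a\<close> show ?thesis by (simp add: zero_ereal_def)
qed

lemma decomp:
  assumes "\<xi> \<in> C"
  shows "0 \<le> \<sigma> * snd \<xi>" "\<sigma> * snd \<xi> = 0 \<Longrightarrow> \<xi> = 0"
    "0 < \<sigma> * snd \<xi> \<Longrightarrow> fst \<xi> / (\<sigma> * snd \<xi>) \<in> D"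
    "0 < \<sigma> * snd \<xi> \<Longrightarrow> \<xi> = (\<sigma> * snd \<xi>) *\<^sub>R (fst \<xi> / (\<sigma> * snd \<xi>), \<sigma>)"
proof -
  show "0 \<le> \<sigma> * snd \<xi>" using sgn assms by auto
  show "\<sigma> * snd \<xi> = 0 \<Longrightarrow> \<xi> = 0" using C_hor assms sig_ne by auto
  assume r: "0 < \<sigma> * snd \<xi>"
  have e: "snd \<xi> / (\<sigma> * snd \<xi>) = \<sigma>" using sig r by auto
  show eq: "\<xi> = (\<sigma> * snd \<xi>) *\<^sub>R (fst \<xi> / (\<sigma> * snd \<xi>), \<sigma>)"
    using r sig by (cases \<xi>) auto
  have "(1 / (\<sigma> * snd \<xi>)) *\<^sub>R \<xi> \<in> C" using C_scale assms r by auto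
  moreover have "(1 / (\<sigma> * snd \<xi>)) *\<^sub>R \<xi> = (fst \<xi> / (\<sigma> * snd \<xi>), \<sigma>)"
    using e by (cases \<xi>) auto
  ultimately show "fst \<xi> / (\<sigma> * snd \<xi>) \<in> D" by (simp add: D_def)
qed

lemma D_mem: "u \<in> D \<Longrightarrow> 0 \<le> r \<Longrightarrow> r *\<^sub>R (u, \<sigma>) \<in> C"
  using C_scale by (auto simp: D_def)

lemma phi_nonneg: "u \<in> D \<Longrightarrow> 0 \<le> \<phi> u"
  using nu_props(3) by (auto simp: D_def \<phi>_def real_of_ereal_pos)

lemma nu_D: "u \<in> D \<Longrightarrow> 0 \<le> r \<Longrightarrow> \<nu> (r *\<^sub>R (u, \<sigma>)) = ereal (r * \<phi> u)"
proof (cases "r = 0")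
  case True then show ?thesis using nu_zero by (simp add: zero_prod_def zero_ereal_def)
next
  case False
  assume "u \<in> D" "0 \<le> r"
  then have "\<nu> (r *\<^sub>R (u, \<sigma>)) = ereal r * \<nu> (u, \<sigma>)" using False nu_props(5) by auto
  also have "\<nu> (u, \<sigma>) = ereal (\<phi> u)" using nu_real \<open>u \<in> D\<close> by (auto simp: D_def \<phi>_def)
  finally show ?thesis by simp
qed

lemma D_closed: "closed D"
proof -
  have "D = (\<lambda>u. (u, \<sigma>)) -` C" by (auto simp: D_def)
  moreover have "continuous_on UNIV (\<lambda>u::real. (u, \<sigma>))" by (intro continuous_intros)
  ultimately show ?thesis using C_closed closed_vimage by metis
qed

lemma D_bdd1:
  assumes s: "s = 1 \<or> s = (-1::real)"
  shows "\<exists>M. \<forall>u\<in>D. s * u \<le> M"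
proof (rule ccontr)
  assume "\<not> ?thesis"
  then have "\<forall>n::nat. \<exists>u\<in>D. real n < s * u" by (meson not_le)
  then obtain f where f: "\<And>n. f n \<in> D" "\<And>n. real n < s * f n" by metis
  have pos: "0 < s * f n" for n using f(2)[of n] by (smt (verit) of_nat_0_le_iff)
  define v where "v n = (1 / (s * f n)) *\<^sub>R (f n, \<sigma>)" for n
  have vC: "v n \<in> C" for n unfolding v_def by (rule D_mem[OF f(1)]) (use pos[of n] in auto)
  have veq: "v n = (s, \<sigma> * inverse (s * f n))" for n
  proof -
    have "f n \<noteq> 0" using pos[of n] by auto
    then show ?thesis using s by (auto simp: v_def field_simps)
  qed
  have "LIM n sequentially. s * f n :> at_top"
    by (rule filterlim_at_top_mono[OF filterlim_real_sequentially]) (use f(2) in \<open>auto intro!: always_eventually less_imp_le\<close>)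
  then have "(\<lambda>n. inverse (s * f n)) \<longlonglongrightarrow> 0" by (rule tendsto_inverse_0_at_top)
  then have "v \<longlonglongrightarrow> (s, \<sigma> * 0)" unfolding veq by (intro tendsto_Pair tendsto_const tendsto_mult)
  then have "(s, 0) \<in> C" using closed_sequentially[OF C_closed] vC by fastforce
  then show False using C_hor[of "(s,0)"] s by (auto simp: zero_prod_def)
qed

lemma D_bounded: "bounded D"
proof -
  obtain M1 M2 where "\<forall>u\<in>D. 1 * u \<le> M1" "\<forall>u\<in>D. (-1) * u \<le> M2"
    using D_bdd1[of 1] D_bdd1[of "-1"] by auto
  then have "\<forall>u\<in>D. norm u \<le> max M1 M2" by (auto simp: abs_if)
  then show ?thesis by (auto simp: bounded_iff)
qed

lemma D_compact: "compact D" using D_closed D_bounded compact_eq_bounded_closed by blast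

lemma phi_usc:
  assumes "u \<in> D" "\<phi> u < c"
  shows "\<exists>e>0. \<forall>v\<in>D. \<bar>v - u\<bar> < e \<longrightarrow> \<phi> v < c"
proof -
  have eq: "\<nu> (u, \<sigma>) = ereal (\<phi> u)" using assms nu_real[of "(u,\<sigma>)"] by (auto simp: D_def \<phi>_def)
  have "\<nu> (u, \<sigma>) < ereal c" unfolding eq using assms by simp
  then have "eventually (\<lambda>y. \<nu> y < ereal c) (at (u, \<sigma>))"
    using nu_props(1) by (auto simp: usc_def)
  then obtain d where d: "d > 0" "\<And>y. y \<noteq> (u, \<sigma>) \<Longrightarrow> dist y (u, \<sigma>) < d \<Longrightarrow> \<nu> y < ereal c"
    by (auto simp: eventually_at)
  show ?thesis
  proof (intro exI[of _ d] conjI d(1) ballI impI)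
    fix v assume v: "v \<in> D" "\<bar>v - u\<bar> < d"
    show "\<phi> v < c"
    proof (cases "v = u")
      case True then show ?thesis using assms by simp
    next
      case False
      have "dist (v, \<sigma>) (u, \<sigma>) = \<bar>v - u\<bar>" by (simp add: dist_Pair_Pair dist_real_def)
      then have "\<nu> (v, \<sigma>) < ereal c" using d(2)[of "(v, \<sigma>)"] v False by auto
      moreover have "\<nu> (v, \<sigma>) = ereal (\<phi> v)" using nu_real[of "(v,\<sigma>)"] v by (auto simp: D_def \<phi>_def)
      ultimately show ?thesis by simp
    qed
  qed
qed

end

lemma usc_max:
  fixes f :: "real \<Rightarrow> real"
  assumes K: "compact K" "K \<noteq> {}"
    and usc: "\<And>u c. u \<in> K \<Longrightarrow> f u < c \<Longrightarrow> \<exists>e>0. \<forall>v\<in>K. \<bar>v - u\<bar> < e \<longrightarrow> f v < c"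
  shows "\<exists>u\<in>K. \<forall>v\<in>K. f v \<le> f u"
proof (rule ccontr)
  assume "\<not> ?thesis"
  then have nm: "\<forall>u\<in>K. \<exists>v\<in>K. f u < f v" by (meson not_le)
  define Op where "Op w = {z. \<exists>e>0. \<forall>v\<in>K. \<bar>v - z\<bar> < e \<longrightarrow> f v < f w}" for w
  have op: "open (Op w)" for w
    unfolding open_dist
  proof (intro ballI)
    fix z assume "z \<in> Op w"
    then obtain e where e: "e > 0" "\<forall>v\<in>K. \<bar>v - z\<bar> < e \<longrightarrow> f v < f w" by (auto simp: Op_def)
    show "\<exists>d>0. \<forall>y. dist y z < d \<longrightarrow> y \<in> Op w"
    proof (intro exI[of _ "e/2"] conjI allI impI)
      fix y assume "dist y z < e/2"
      then have yz: "\<bar>y - z\<bar> < e/2" by (simp add: dist_real_def)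
      have "\<forall>v\<in>K. \<bar>v - y\<bar> < e/2 \<longrightarrow> f v < f w"
      proof (intro ballI impI)
        fix v assume v: "v \<in> K" "\<bar>v - y\<bar> < e/2"
        then have "\<bar>v - z\<bar> < e" using yz by arith
        then show "f v < f w" using e v by auto
      qed
      then show "y \<in> Op w" using e by (auto simp: Op_def intro!: exI[of _ "e/2"])
    qed (use e in auto)
  qed
  have cov: "K \<subseteq> (\<Union>w\<in>K. Op w)"
  proof
    fix u assume u: "u \<in> K"
    then obtain v where v: "v \<in> K" "f u < f v" using nm by blast
    from usc[OF u v(2)] have "u \<in> Op v" by (auto simp: Op_def)
    then show "u \<in> (\<Union>w\<in>K. Op w)" using v by blast
  qed
  obtain F where F: "F \<subseteq> K" "finite F" "K \<subseteq> (\<Union>w\<in>F. Op w)"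
    using compactE_image[OF K(1) op cov] by metis
  then have "F \<noteq> {}" using K(2) by auto
  define m where "m = Max (f ` F)"
  have "m \<in> f ` F" unfolding m_def using Max_in[of "f ` F"] \<open>F \<noteq> {}\<close> F(2) by auto
  then obtain w where w: "w \<in> F" "f w = m" by auto
  have mx: "f w' \<le> f w" if "w' \<in> F" for w' using w that F(2) by (auto simp: m_def)
  have "w \<in> K" using w F by auto
  then obtain w' where "w' \<in> F" "w \<in> Op w'" using F(3) by auto
  then obtain e where "e > 0" "\<forall>v\<in>K. \<bar>v - w\<bar> < e \<longrightarrow> f v < f w'" by (auto simp: Op_def)
  then have "f w < f w'" using \<open>w \<in> K\<close> by auto
  then show False using mx[OF \<open>w' \<in> F\<close>] by simp
qed

context LS begin

definition A where "A \<mu> = {u\<in>D. \<forall>v\<in>D. \<phi> v - \<mu> * v \<le> \<phi> u - \<mu> * u}"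

lemma f_usc:
  assumes "u \<in> D" "\<phi> u - \<mu> * u < c"
  shows "\<exists>e>0. \<forall>v\<in>D. \<bar>v - u\<bar> < e \<longrightarrow> \<phi> v - \<mu> * v < c"
proof -
  define \<delta> where "\<delta> = c - (\<phi> u - \<mu> * u)"
  have dp: "\<delta> > 0" using assms by (simp add: \<delta>_def)
  obtain e1 where e1: "e1 > 0" "\<forall>v\<in>D. \<bar>v - u\<bar> < e1 \<longrightarrow> \<phi> v < \<phi> u + \<delta>/2"
    using phi_usc[OF assms(1), of "\<phi> u + \<delta>/2"] dp by auto
  define e where "e = min e1 (\<delta> / (2 * (\<bar>\<mu>\<bar> + 1)))"
  have ep: "e > 0" using e1 dp by (auto simp: e_def)
  show ?thesis
  proof (intro exI[of _ e] conjI ep ballI impI)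
    fix v assume v: "v \<in> D" "\<bar>v - u\<bar> < e"
    then have "\<phi> v < \<phi> u + \<delta>/2" using e1 by (auto simp: e_def)
    moreover have "\<bar>\<mu> * v - \<mu> * u\<bar> \<le> \<delta>/2"
    proof -
      have "\<bar>\<mu> * v - \<mu> * u\<bar> = \<bar>\<mu>\<bar> * \<bar>v - u\<bar>" by (simp add: abs_mult[symmetric] right_diff_distrib)
      also have "\<dots> \<le> (\<bar>\<mu>\<bar> + 1) * (\<delta> / (2 * (\<bar>\<mu>\<bar> + 1)))"
        using v(2) by (intro mult_mono) (auto simp: e_def)
      also have "\<dots> = \<delta>/2" by (simp add: field_simps)
      finally show ?thesis .
    qed
    moreover have "\<mu> * u - \<mu> * v \<le> \<delta>/2" using calculation(2) by linarith
    ultimately show "\<phi> v - \<mu> * v < c" using \<delta>_def by linarith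
  qed
qed

lemma A_ne: "D \<noteq> {} \<Longrightarrow> A \<mu> \<noteq> {}"
  using usc_max[OF D_compact, of "\<lambda>u. \<phi> u - \<mu> * u"] f_usc by (auto simp: A_def)

lemma A_sub: "A \<mu> \<subseteq> D" by (auto simp: A_def)

lemma A_mono:
  assumes "\<mu>1 < \<mu>2" "u1 \<in> A \<mu>1" "u2 \<in> A \<mu>2"
  shows "u2 \<le> u1"
proof -
  have "\<phi> u2 - \<mu>1 * u2 \<le> \<phi> u1 - \<mu>1 * u1" "\<phi> u1 - \<mu>2 * u1 \<le> \<phi> u2 - \<mu>2 * u2"
    using assms by (auto simp: A_def)
  then have "(\<mu>2 - \<mu>1) * (u1 - u2) \<ge> 0" by (simp add: algebra_simps)
  then show ?thesis using assms(1) by (simp add: zero_le_mult_iff)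
qed

lemma A_graph:
  assumes u: "\<And>n. u n \<in> A (m n)" and ul: "u \<longlonglongrightarrow> v" and ml: "m \<longlonglongrightarrow> \<mu>"
  shows "v \<in> A \<mu>"
proof -
  have vD: "v \<in> D" using closed_sequentially[OF D_closed, of u v] u ul A_sub by blast
  show ?thesis unfolding A_def
  proof (intro CollectI conjI vD ballI)
    fix w assume w: "w \<in> D"
    show "\<phi> w - \<mu> * w \<le> \<phi> v - \<mu> * v"
    proof (rule ccontr)
      assume "\<not> ?thesis"
      then have lt: "\<phi> v - \<mu> * v < \<phi> w - \<mu> * w" by simp
      define c where "c = (\<phi> v + (\<phi> w - \<mu> * w + \<mu> * v)) / 2"
      have c1: "\<phi> v < c" and c2: "c < \<phi> w - \<mu> * w + \<mu> * v" using lt by (auto simp: c_def)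
      obtain e where e: "e > 0" "\<forall>z\<in>D. \<bar>z - v\<bar> < e \<longrightarrow> \<phi> z < c" using phi_usc[OF vD c1] by auto
      have "eventually (\<lambda>n. dist (u n) v < e) sequentially" using ul e(1) tendstoD by blast
      then have ev: "eventually (\<lambda>n. \<phi> (u n) < c) sequentially"
        by eventually_elim (use e u A_sub in \<open>auto simp: dist_real_def\<close>)
      have ev2: "eventually (\<lambda>n. \<phi> w - m n * w \<le> c - m n * u n) sequentially"
        using ev
      proof eventually_elim
        case (elim n)
        have "\<phi> w - m n * w \<le> \<phi> (u n) - m n * u n" using u[of n] w by (auto simp: A_def)
        then show ?case using elim by simp
      qed
      have "(\<lambda>n. \<phi> w - m n * w) \<longlonglongrightarrow> \<phi> w - \<mu> * w" by (intro tendsto_intros ml)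
      moreover have "(\<lambda>n. c - m n * u n) \<longlonglongrightarrow> c - \<mu> * v" by (intro tendsto_intros ml ul)
      ultimately have "\<phi> w - \<mu> * w \<le> c - \<mu> * v" using ev2 by (intro tendsto_le[OF trivial_limit_sequentially]) 
      then show False using c2 by simp
    qed
  qed
qed

lemma A_closed: "closed (A \<mu>)"
  unfolding closed_sequential_limits
  using A_graph[where m="\<lambda>_. \<mu>"] by auto

definition Up where "Up \<mu> = Sup (A \<mu>)"
definition Um where "Um \<mu> = Inf (A \<mu>)"

lemma A_bdd: "bdd_above (A \<mu>)" "bdd_below (A \<mu>)"
  using bounded_subset[OF D_bounded A_sub] bounded_imp_bdd_above bounded_imp_bdd_below by auto

lemma Up_in: "D \<noteq> {} \<Longrightarrow> Up \<mu> \<in> A \<mu>"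
  unfolding Up_def using closed_contains_Sup[OF A_ne A_bdd(1) A_closed] by auto
lemma Um_in: "D \<noteq> {} \<Longrightarrow> Um \<mu> \<in> A \<mu>"
  unfolding Um_def using closed_contains_Inf[OF A_ne A_bdd(2) A_closed] by auto
lemma Um_le_Up: "D \<noteq> {} \<Longrightarrow> Um \<mu> \<le> Up \<mu>"
  unfolding Um_def Up_def using A_ne A_bdd by (meson cInf_le_cSup)
lemma Up_ge: "u \<in> A \<mu> \<Longrightarrow> u \<le> Up \<mu>"
  unfolding Up_def using A_bdd by (simp add: cSup_upper)
lemma Um_le: "u \<in> A \<mu> \<Longrightarrow> Um \<mu> \<le> u"
  unfolding Um_def using A_bdd by (simp add: cInf_lower)

end

lemma CAL_gen:
  fixes G G' :: "real \<Rightarrow> real" and N :: "real \<Rightarrow> ereal"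
  assumes lip: "L-lipschitz_on {0..1} G"
    and ae: "AE t in lebesgue. t \<in> {0..1} \<longrightarrow> (G has_real_derivative G' t) (at t) \<and> 0 \<le> N t \<and> N t \<le> ereal (G' t)"
  shows "(\<integral>\<^sup>+t. e2ennreal (N t) \<partial>lebesgue_on {0..1}) \<le> ennreal (G 1 - G 0)"
    and "(AE t in lebesgue. t \<in> {0..1} \<longrightarrow> N t = ereal (G' t)) \<Longrightarrow>
         (\<integral>\<^sup>+t. e2ennreal (N t) \<partial>lebesgue_on {0..1}) = ennreal (G 1 - G 0)"
proof -
  have int: "(G' has_integral G 1 - G 0) {0..1}"
    by (rule lipschitz_FTC[OF lip]) (use ae in \<open>auto elim: eventually_mono\<close>)
  from ae obtain N0 where N0: "N0 \<in> null_sets lebesgue"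
    and NP: "\<And>t. t \<notin> N0 \<Longrightarrow> t \<in> {0..1} \<Longrightarrow> (G has_real_derivative G' t) (at t) \<and> 0 \<le> N t \<and> N t \<le> ereal (G' t)"
    by (auto elim!: AE_E3)
  have negl: "negligible N0" using N0 negligible_iff_null_sets by blast
  define F where "F t = (if t \<in> {0..1} then max 0 (G' t) else 0)" for t
  have Fnn: "0 \<le> F t" for t by (auto simp: F_def)
  have "((\<lambda>t. max 0 (G' t)) has_integral G 1 - G 0) {0..1}"
  proof (rule has_integral_spike[OF negl _ int])
    fix t assume t: "t \<in> {0..1} - N0"
    then have "0 \<le> N t \<and> N t \<le> ereal (G' t)" using NP[of t] by auto
    then have "0 \<le> ereal (G' t)" by (meson order_trans)
    then have "0 \<le> G' t" by simp
    then show "max 0 (G' t) = G' t" by simp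
  qed
  then have "(F has_integral G 1 - G 0) UNIV"
    unfolding F_def by (subst has_integral_restrict_UNIV)
  then have nnF: "(\<integral>\<^sup>+ x. ennreal (F x) \<partial>lebesgue) = ennreal (G 1 - G 0)"
    using has_integral_iff_nn_integral_lebesgue[of F, OF Fnn] by blast
  have rs: "(\<integral>\<^sup>+t. e2ennreal (N t) \<partial>lebesgue_on {0..1}) = (\<integral>\<^sup>+t. e2ennreal (N t) * indicator {0..1} t \<partial>lebesgue)"
    by (rule nn_integral_restrict_space) auto
  have AEle: "AE t in lebesgue. e2ennreal (N t) * indicator {0..1} t \<le> ennreal (F t)"
  proof (rule AE_I'[OF N0])
    show "{t \<in> space lebesgue. \<not> e2ennreal (N t) * indicator {0..1} t \<le> ennreal (F t)} \<subseteq> N0"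
    proof (rule subsetI, rule ccontr)
      fix t assume t: "t \<in> {t \<in> space lebesgue. \<not> e2ennreal (N t) * indicator {0..1} t \<le> ennreal (F t)}" "t \<notin> N0"
      show False
      proof (cases "t \<in> {0..1}")
        case True
        then have "N t \<le> ereal (G' t)" using NP[OF t(2)] by auto
        then have "e2ennreal (N t) \<le> ennreal (G' t)" using e2ennreal_mono e2ennreal_ereal by metis
        also have "\<dots> \<le> ennreal (F t)" using True by (auto simp: F_def intro: ennreal_leI)
        finally show False using t(1) True by auto
      next
        case False then show False using t(1) by auto
      qed
    qed
  qed
  show "(\<integral>\<^sup>+t. e2ennreal (N t) \<partial>lebesgue_on {0..1}) \<le> ennreal (G 1 - G 0)"
    unfolding rs nnF[symmetric] by (rule nn_integral_mono_AE[OF AEle])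
  assume ae2: "AE t in lebesgue. t \<in> {0..1} \<longrightarrow> N t = ereal (G' t)"
  have AEeq: "AE t in lebesgue. e2ennreal (N t) * indicator {0..1} t = ennreal (F t)"
    using ae2 ae
  proof eventually_elim
    case (elim t)
    show ?case
    proof (cases "t \<in> {0..1}")
      case True
      then have "N t = ereal (G' t)" "0 \<le> N t" using elim by auto
      then show ?thesis using True by (auto simp: F_def e2ennreal_ereal)
    qed (auto simp: F_def)
  qed
  show "(\<integral>\<^sup>+t. e2ennreal (N t) \<partial>lebesgue_on {0..1}) = ennreal (G 1 - G 0)"
    unfolding rs nnF[symmetric] by (rule nn_integral_cong_AE[OF AEeq])
qed


lemma deriv_lip:
  fixes f f' :: "real \<Rightarrow> real"
  assumes d: "\<And>x. x \<in> {a..b} \<Longrightarrow> (f has_real_derivative f' x) (at x)"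
    and bd: "\<And>x. x \<in> {a..b} \<Longrightarrow> \<bar>f' x\<bar> \<le> B" and B: "0 \<le> B"
  shows "B-lipschitz_on {a..b} f"
proof (rule lipschitz_onI[OF _ B])
  have *: "\<bar>f y - f x\<bar> \<le> B * (y - x)" if "x \<in> {a..b}" "y \<in> {a..b}" "x < y" for x y
  proof -
    have dd: "(f has_real_derivative f' w) (at w)" if "x \<le> w" "w \<le> y" for w
      using d[of w] that \<open>x \<in> {a..b}\<close> \<open>y \<in> {a..b}\<close> by auto
    obtain z where z: "x < z" "z < y" "f y - f x = (y - x) * f' z"
      using MVT2[OF \<open>x < y\<close> dd] by blast
    have "z \<in> {a..b}" using z that by auto
    then have "\<bar>f' z\<bar> \<le> B" by (rule bd)
    have "\<bar>f y - f x\<bar> = (y - x) * \<bar>f' z\<bar>" using z(3) \<open>x < y\<close> by (simp add: abs_mult)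
    also have "\<dots> \<le> (y - x) * B" using \<open>\<bar>f' z\<bar> \<le> B\<close> \<open>x < y\<close> by (intro mult_left_mono) auto
    finally show ?thesis by (simp add: mult.commute)
  qed
  fix x y assume "x \<in> {a..b}" "y \<in> {a..b}"
  then show "dist (f x) (f y) \<le> B * dist x y"
  proof (cases rule: linorder_cases[of x y])
    case less
    then show ?thesis using *[of x y] \<open>x \<in> {a..b}\<close> \<open>y \<in> {a..b}\<close>
      by (simp add: dist_real_def abs_minus_commute)
  next
    case greater
    then show ?thesis using *[of y x] \<open>x \<in> {a..b}\<close> \<open>y \<in> {a..b}\<close>
      by (simp add: dist_real_def)
  qed (simp add: B)
qed

lemma hvd_fst: "(\<gamma> has_vector_derivative v) F \<Longrightarrow> ((\<lambda>t. fst (\<gamma> t)) has_real_derivative fst v) F"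
  unfolding has_real_derivative_iff_has_vector_derivative has_vector_derivative_def
  by (drule has_derivative_fst) simp

lemma hvd_snd: "(\<gamma> has_vector_derivative v) F \<Longrightarrow> ((\<lambda>t. snd (\<gamma> t)) has_real_derivative snd v) F"
  unfolding has_real_derivative_iff_has_vector_derivative has_vector_derivative_def
  by (drule has_derivative_snd) simp


definition xi :: "(real \<Rightarrow> real \<times> real) \<Rightarrow> real \<Rightarrow> real \<times> real" where
  "xi \<gamma> t = (1 / snd (\<gamma> t)) *\<^sub>R vector_derivative \<gamma> (at t)"

lemma adm_lip: "admissible C \<gamma> \<Longrightarrow> \<exists>K. K-lipschitz_on {0..1} \<gamma>"
  by (auto simp: admissible_def)

lemma lip_fst: "K-lipschitz_on S \<gamma> \<Longrightarrow> K-lipschitz_on S (\<lambda>t. fst (\<gamma> t))"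
  by (rule lipschitz_onI) (auto dest: lipschitz_onD lipschitz_on_nonneg intro: order_trans[OF dist_fst_le])
lemma lip_snd: "K-lipschitz_on S \<gamma> \<Longrightarrow> K-lipschitz_on S (\<lambda>t. snd (\<gamma> t))"
  by (rule lipschitz_onI) (auto dest: lipschitz_onD lipschitz_on_nonneg intro: order_trans[OF dist_snd_le])

lemma adm_bounds:
  assumes "admissible C \<gamma>"
  shows "\<exists>m M. 0 < m \<and> (\<forall>t\<in>{0..1}. m \<le> snd (\<gamma> t) \<and> snd (\<gamma> t) \<le> M)"
proof -
  obtain K where K: "K-lipschitz_on {0..1} \<gamma>" using adm_lip[OF assms] by blast
  have c: "continuous_on {0..1} (\<lambda>t. snd (\<gamma> t))" using lip_snd[OF K] lipschitz_on_continuous_on by blast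
  obtain t1 where t1: "t1 \<in> {0..1}" "\<forall>t\<in>{0..1}. snd (\<gamma> t1) \<le> snd (\<gamma> t)"
    using continuous_attains_inf[OF compact_Icc _ c] by auto
  obtain t2 where t2: "t2 \<in> {0..1}" "\<forall>t\<in>{0..1}. snd (\<gamma> t) \<le> snd (\<gamma> t2)"
    using continuous_attains_sup[OF compact_Icc _ c] by auto
  have "0 < snd (\<gamma> t1)" using assms t1(1) by (auto simp: admissible_def G_set_def)
  then show ?thesis using t1 t2 by blast
qed

lemma adm_pos: "admissible C \<gamma> \<Longrightarrow> t \<in> {0..1} \<Longrightarrow> 0 < snd (\<gamma> t)"
  by (auto simp: admissible_def G_set_def)

lemma adm_AE:
  assumes "admissible C \<gamma>"
  shows "AE t in lebesgue. t \<in> {0..1} \<longrightarrow>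
     ((\<lambda>t. fst (\<gamma> t)) has_real_derivative snd (\<gamma> t) * fst (xi \<gamma> t)) (at t) \<and>
     ((\<lambda>t. snd (\<gamma> t)) has_real_derivative snd (\<gamma> t) * snd (xi \<gamma> t)) (at t) \<and>
     xi \<gamma> t \<in> C \<and> nu_at \<nu> (\<gamma> t) (vector_derivative \<gamma> (at t)) = \<nu> (xi \<gamma> t)"
proof -
  have "AE t in lebesgue. t \<in> {0..1} \<longrightarrow>
        \<gamma> differentiable (at t) \<and> vector_derivative \<gamma> (at t) \<in> cone_at C (\<gamma> t)"
    using assms by (auto simp: admissible_def)
  then show ?thesis
  proof eventually_elim
    case (elim t)
    show ?case
    proof
      assume t: "t \<in> {0..1}"
      define v where "v = vector_derivative \<gamma> (at t)"
      have hv: "(\<gamma> has_vector_derivative v) (at t)"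
        using elim t vector_derivative_works by (auto simp: v_def)
      obtain \<zeta> where z: "\<zeta> \<in> C" "v = snd (\<gamma> t) *\<^sub>R \<zeta>"
        using elim t by (auto simp: cone_at_def v_def)
      have y: "0 < snd (\<gamma> t)" using adm_pos[OF assms t] .
      have xe: "xi \<gamma> t = \<zeta>" using y z by (simp add: xi_def v_def[symmetric])
      show "((\<lambda>t. fst (\<gamma> t)) has_real_derivative snd (\<gamma> t) * fst (xi \<gamma> t)) (at t) \<and>
     ((\<lambda>t. snd (\<gamma> t)) has_real_derivative snd (\<gamma> t) * snd (xi \<gamma> t)) (at t) \<and>
     xi \<gamma> t \<in> C \<and> nu_at \<nu> (\<gamma> t) (vector_derivative \<gamma> (at t)) = \<nu> (xi \<gamma> t)"
        using hvd_fst[OF hv] hvd_snd[OF hv] z xe by (auto simp: nu_at_def xi_def)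
    qed
  qed
qed

context LS begin

lemma pointwise_cal:
  assumes xC: "\<xi> \<in> C" and cond: "\<And>u. u \<in> D \<Longrightarrow> \<phi> u - lam * y * u \<le> hv"
  shows "\<nu> \<xi> \<le> ereal ((\<sigma> * snd \<xi>) * hv + lam * (y * fst \<xi>))" "0 \<le> \<nu> \<xi>"
    and "(0 < \<sigma> * snd \<xi> \<Longrightarrow> \<phi> (fst \<xi> / (\<sigma> * snd \<xi>)) - lam * y * (fst \<xi> / (\<sigma> * snd \<xi>)) = hv)
          \<Longrightarrow> \<nu> \<xi> = ereal ((\<sigma> * snd \<xi>) * hv + lam * (y * fst \<xi>))"
proof -
  show "0 \<le> \<nu> \<xi>" using nu_props(3) xC by auto
  define r where "r = \<sigma> * snd \<xi>"
  have r0: "0 \<le> r" using decomp(1)[OF xC] by (simp add: r_def)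
  show "\<nu> \<xi> \<le> ereal ((\<sigma> * snd \<xi>) * hv + lam * (y * fst \<xi>))"
  proof (cases "r = 0")
    case True
    then have "\<xi> = 0" using decomp(2)[OF xC] by (simp add: r_def)
    then show ?thesis by (simp add: nu_zero zero_ereal_def)
  next
    case False
    then have rp: "0 < r" using r0 by auto
    define u where "u = fst \<xi> / r"
    have uD: "u \<in> D" using decomp(3)[OF xC] rp by (simp add: u_def r_def)
    have xe: "\<xi> = r *\<^sub>R (u, \<sigma>)" using decomp(4)[OF xC] rp by (simp add: u_def r_def)
    have "\<nu> \<xi> = ereal (r * \<phi> u)" using nu_D[OF uD r0] xe by simp
    moreover have "r * \<phi> u \<le> r * (hv + lam * y * u)" using cond[OF uD] r0 by (intro mult_left_mono) auto
    moreover have "r * (hv + lam * y * u) = r * hv + lam * (y * fst \<xi>)"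
      using rp by (simp add: u_def field_simps)
    ultimately show ?thesis by (simp add: r_def)
  qed
  assume eqc: "0 < \<sigma> * snd \<xi> \<Longrightarrow> \<phi> (fst \<xi> / (\<sigma> * snd \<xi>)) - lam * y * (fst \<xi> / (\<sigma> * snd \<xi>)) = hv"
  show "\<nu> \<xi> = ereal ((\<sigma> * snd \<xi>) * hv + lam * (y * fst \<xi>))"
  proof (cases "r = 0")
    case True
    then have "\<xi> = 0" using decomp(2)[OF xC] by (simp add: r_def)
    then show ?thesis by (simp add: nu_zero zero_ereal_def)
  next
    case False
    then have rp: "0 < r" using r0 by auto
    define u where "u = fst \<xi> / r"
    have uD: "u \<in> D" using decomp(3)[OF xC] rp by (simp add: u_def r_def)
    have xe: "\<xi> = r *\<^sub>R (u, \<sigma>)" using decomp(4)[OF xC] rp by (simp add: u_def r_def)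
    have "\<nu> \<xi> = ereal (r * \<phi> u)" using nu_D[OF uD r0] xe by simp
    moreover have "\<phi> u - lam * y * u = hv" using eqc rp by (simp add: u_def r_def)
    moreover have "r * (hv + lam * y * u) = r * hv + lam * (y * fst \<xi>)"
      using rp by (simp add: u_def field_simps)
    ultimately show ?thesis by (simp add: r_def algebra_simps)
  qed
qed

end

context LS begin

definition Mx where "Mx \<mu> = \<phi> (Up \<mu>) - \<mu> * Up \<mu>"

lemma Mx_ge: "D \<noteq> {} \<Longrightarrow> u \<in> D \<Longrightarrow> \<phi> u - \<mu> * u \<le> Mx \<mu>"
  using Up_in[of \<mu>] by (auto simp: Mx_def A_def)

lemma Mx_eq: "D \<noteq> {} \<Longrightarrow> u \<in> A \<mu> \<Longrightarrow> \<phi> u - \<mu> * u = Mx \<mu>"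
  using Up_in[of \<mu>] A_sub by (force simp: Mx_def A_def intro: antisym)

lemma D_R: obtains R where "0 \<le> R" "\<And>u. u \<in> D \<Longrightarrow> \<bar>u\<bar> \<le> R"
proof -
  obtain R where "\<forall>u\<in>D. norm u \<le> R" using D_bounded bounded_iff by blast
  then show ?thesis using that[of "max R 0"] by fastforce
qed

lemma Mx_cont: assumes "D \<noteq> {}" shows "continuous_on UNIV Mx"
proof -
  obtain R where R: "0 \<le> R" "\<And>u. u \<in> D \<Longrightarrow> \<bar>u\<bar> \<le> R" using D_R by blast
  have *: "Mx \<mu>' - Mx \<mu> \<le> R * \<bar>\<mu>' - \<mu>\<bar>" for \<mu> \<mu>'
  proof -
    have uD: "Up \<mu>' \<in> D" using Up_in[OF assms] A_sub by blast
    have "Mx \<mu>' - Mx \<mu> \<le> (\<phi> (Up \<mu>') - \<mu>' * Up \<mu>') - (\<phi> (Up \<mu>') - \<mu> * Up \<mu>')"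
      using Mx_ge[OF assms uD, of \<mu>] by (simp add: Mx_def)
    also have "\<dots> = (\<mu> - \<mu>') * Up \<mu>'" by (simp add: algebra_simps)
    also have "\<dots> \<le> \<bar>\<mu>' - \<mu>\<bar> * R"
    proof -
      have "(\<mu> - \<mu>') * Up \<mu>' \<le> \<bar>(\<mu> - \<mu>') * Up \<mu>'\<bar>" by simp
      also have "\<dots> = \<bar>\<mu>' - \<mu>\<bar> * \<bar>Up \<mu>'\<bar>" by (simp add: abs_mult abs_minus_commute)
      also have "\<dots> \<le> \<bar>\<mu>' - \<mu>\<bar> * R" using R(2)[OF uD] by (intro mult_left_mono) auto
      finally show ?thesis .
    qed
    finally show ?thesis by (simp add: mult.commute)
  qed
  have "R-lipschitz_on UNIV Mx"
  proof (rule lipschitz_onI[OF _ R(1)])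
    fix x y :: real
    show "dist (Mx x) (Mx y) \<le> R * dist x y"
      using *[of x y] *[of y x] by (simp add: dist_real_def abs_le_iff abs_minus_commute)
  qed
  then show ?thesis using lipschitz_on_continuous_on by blast
qed

definition hh where "hh lam s = Mx (lam * exp (\<sigma> * s))"
definition HH where "HH lam (s::real) = (LBINT v=(0::real)..s. hh lam v)"

lemma hh_cont: "D \<noteq> {} \<Longrightarrow> continuous_on UNIV (hh lam)"
  unfolding hh_def
  by (rule continuous_on_compose2[OF Mx_cont]) (auto intro!: continuous_intros)

lemma HH_deriv:
  assumes "D \<noteq> {}"
  shows "(HH lam has_real_derivative hh lam s) (at s)"
proof -
  define a where "a = min 0 s - 1"
  define b where "b = max 0 s + 1"
  have "(HH lam has_vector_derivative hh lam s) (at s within {a..b})"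
  proof -
    have c: "continuous_on {a..b} (hh lam)" by (rule continuous_on_subset[OF hh_cont[OF assms]]) auto
    show ?thesis using interval_integral_FTC2[of a 0 b "hh lam" s, OF _ _ c]
      by (auto simp: HH_def[abs_def] a_def b_def min_def max_def)
  qed
  moreover have "at s within {a..b} = at s"
    by (rule at_within_interior) (auto simp: a_def b_def)
  ultimately show ?thesis by (simp add: has_real_derivative_iff_has_vector_derivative)
qed

lemma HH_lip:
  assumes "D \<noteq> {}"
  shows "\<exists>B. B-lipschitz_on {-R0..R0} (HH lam)"
proof -
  have "compact (hh lam ` {-R0..R0})"
    by (rule compact_continuous_image) (auto intro: continuous_on_subset[OF hh_cont[OF assms]])
  then obtain B where B: "\<forall>x\<in>hh lam ` {-R0..R0}. norm x \<le> B"
    using compact_imp_bounded bounded_iff by metis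
  have "(max B 0)-lipschitz_on {-R0..R0} (HH lam)"
    by (rule deriv_lip[OF HH_deriv[OF assms]]) (use B in \<open>auto intro: max.coboundedI1\<close>)
  then show ?thesis by blast
qed

end

context LS begin

theorem cal_path:
  assumes Dne: "D \<noteq> {}" and adm: "admissible C \<gamma>" and g0: "\<gamma> 0 = (0,1)" and g1: "\<gamma> 1 = (X, Y)"
  shows "path_length \<nu> \<gamma> \<le> ennreal (HH lam (\<sigma> * ln Y) - HH lam 0 + lam * X)"
    and "(AE t in lebesgue. t \<in> {0..1} \<longrightarrow> (0 < \<sigma> * snd (xi \<gamma> t) \<longrightarrow>
            fst (xi \<gamma> t) / (\<sigma> * snd (xi \<gamma> t)) \<in> A (lam * snd (\<gamma> t)))) \<Longrightarrow>
         path_length \<nu> \<gamma> = ennreal (HH lam (\<sigma> * ln Y) - HH lam 0 + lam * X)"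
proof -
  obtain K where K: "K-lipschitz_on {0..1} \<gamma>" using adm_lip[OF adm] by blast
  obtain m M where mM: "0 < m" "\<And>t. t \<in> {0..1} \<Longrightarrow> m \<le> snd (\<gamma> t) \<and> snd (\<gamma> t) \<le> M"
    using adm_bounds[OF adm] by blast
  define y where "y t = snd (\<gamma> t)" for t
  define x where "x t = fst (\<gamma> t)" for t
  define s where "s t = \<sigma> * ln (y t)" for t
  define G where "G t = HH lam (s t) + lam * x t" for t
  define G' where "G' t = (\<sigma> * snd (xi \<gamma> t)) * hh lam (s t) + lam * (y t * fst (xi \<gamma> t))" for t
  define N where "N t = nu_at \<nu> (\<gamma> t) (vector_derivative \<gamma> (at t))" for t
  have pl: "path_length \<nu> \<gamma> = (\<integral>\<^sup>+t. e2ennreal (N t) \<partial>lebesgue_on {0..1})"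
    by (simp add: path_length_def N_def)
  have lnlip: "(1/m)-lipschitz_on {m..M} ln"
  proof (rule deriv_lip[where f'="\<lambda>x. 1/x"])
    fix z assume "z \<in> {m..M}"
    then have "0 < z" using mM(1) by auto
    then show "(ln has_real_derivative 1 / z) (at z)" by (rule DERIV_ln_divide)
    show "\<bar>1 / z\<bar> \<le> 1 / m" using \<open>0 < z\<close> \<open>z \<in> {m..M}\<close> mM(1) by (auto simp: divide_simps)
  qed (use mM(1) in auto)
  have ylip: "K-lipschitz_on {0..1} y" unfolding y_def by (rule lip_snd[OF K])
  have yim: "y ` {0..1} \<subseteq> {m..M}" using mM(2) by (auto simp: y_def)
  have "((1/m) * K)-lipschitz_on {0..1} (\<lambda>t. ln (y t))"
    by (rule lipschitz_on_compose2[OF ylip lipschitz_on_subset[OF lnlip yim]])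
  then have slip: "(\<bar>\<sigma>\<bar> * ((1/m) * K))-lipschitz_on {0..1} s"
    unfolding s_def by (rule lipschitz_on_cmult_real)
  define R0 where "R0 = \<bar>ln m\<bar> + \<bar>ln M\<bar>"
  have sim: "s ` {0..1} \<subseteq> {-R0..R0}"
  proof
    fix z assume "z \<in> s ` {0..1}"
    then obtain t where t: "t \<in> {0..1}" "z = s t" by auto
    have my: "m \<le> y t" "y t \<le> M" using mM(2)[OF t(1)] by (auto simp: y_def)
    then have "ln m \<le> ln (y t)" "ln (y t) \<le> ln M" using mM(1) by auto
    then have "\<bar>ln (y t)\<bar> \<le> R0" by (auto simp: R0_def abs_le_iff)
    then show "z \<in> {-R0..R0}" using t sig by (auto simp: s_def abs_le_iff)
  qed
  obtain B where B: "B-lipschitz_on {-R0..R0} (HH lam)" using HH_lip[OF Dne] by blast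
  have "(B * (\<bar>\<sigma>\<bar> * ((1/m) * K)))-lipschitz_on {0..1} (\<lambda>t. HH lam (s t))"
    by (rule lipschitz_on_compose2[OF slip lipschitz_on_subset[OF B sim]])
  moreover have "(\<bar>lam\<bar> * K)-lipschitz_on {0..1} (\<lambda>t. lam * x t)"
    unfolding x_def by (rule lipschitz_on_cmult_real[OF lip_fst[OF K]])
  ultimately have Glip: "(B * (\<bar>\<sigma>\<bar> * ((1/m) * K)) + \<bar>lam\<bar> * K)-lipschitz_on {0..1} G"
    unfolding G_def by (rule lipschitz_on_add)
  have key: "AE t in lebesgue. t \<in> {0..1} \<longrightarrow> (G has_real_derivative G' t) (at t) \<and> 0 \<le> N t \<and> N t \<le> ereal (G' t)
      \<and> ((0 < \<sigma> * snd (xi \<gamma> t) \<longrightarrow> fst (xi \<gamma> t) / (\<sigma> * snd (xi \<gamma> t)) \<in> A (lam * snd (\<gamma> t))) \<longrightarrow> N t = ereal (G' t))"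
    using adm_AE[OF adm, of \<nu>]
  proof eventually_elim
    case (elim t)
    show ?case
    proof
      assume t: "t \<in> {0..1}"
      have yp: "0 < y t" using adm_pos[OF adm t] by (simp add: y_def)
      define \<xi> where "\<xi> = xi \<gamma> t"
      have dx: "(x has_real_derivative y t * fst \<xi>) (at t)"
        and dy: "(y has_real_derivative y t * snd \<xi>) (at t)"
        and xC: "\<xi> \<in> C" and Ne: "N t = \<nu> \<xi>"
        using elim t by (auto simp: x_def[abs_def] y_def[abs_def] \<xi>_def N_def)
      have dln: "((\<lambda>t. ln (y t)) has_real_derivative 1 / y t * (y t * snd \<xi>)) (at t)"
        by (rule DERIV_chain2[OF DERIV_ln_divide[OF yp] dy])
      have ds: "(s has_real_derivative \<sigma> * (1 / y t * (y t * snd \<xi>))) (at t)"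
        unfolding s_def by (rule DERIV_cmult[OF dln])
      have dH: "((\<lambda>t. HH lam (s t)) has_real_derivative hh lam (s t) * (\<sigma> * (1 / y t * (y t * snd \<xi>)))) (at t)"
        by (rule DERIV_chain2[OF HH_deriv[OF Dne] ds])
      have dG: "(G has_real_derivative hh lam (s t) * (\<sigma> * (1 / y t * (y t * snd \<xi>))) + lam * (y t * fst \<xi>)) (at t)"
        unfolding G_def by (intro DERIV_add dH DERIV_cmult dx)
      have "hh lam (s t) * (\<sigma> * (1 / y t * (y t * snd \<xi>))) + lam * (y t * fst \<xi>) = G' t"
        using yp by (simp add: G'_def \<xi>_def)
      with dG have dG': "(G has_real_derivative G' t) (at t)" by simp
      have ex: "exp (\<sigma> * s t) = y t"
      proof -
        have "\<sigma> * s t = ln (y t)" using sig2 by (simp add: s_def mult.assoc[symmetric])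
        then show ?thesis using yp by simp
      qed
      have cond: "\<phi> u - lam * y t * u \<le> hh lam (s t)" if "u \<in> D" for u
        using Mx_ge[OF Dne that, of "lam * y t"] by (simp add: hh_def ex)
      note pc = pointwise_cal[OF xC cond]
      have Gx: "G' t = (\<sigma> * snd \<xi>) * hh lam (s t) + lam * (y t * fst \<xi>)" by (simp add: G'_def \<xi>_def)
      have eqp: "N t = ereal (G' t)"
        if h: "0 < \<sigma> * snd (xi \<gamma> t) \<longrightarrow> fst (xi \<gamma> t) / (\<sigma> * snd (xi \<gamma> t)) \<in> A (lam * snd (\<gamma> t))"
      proof -
        have "\<phi> (fst \<xi> / (\<sigma> * snd \<xi>)) - lam * y t * (fst \<xi> / (\<sigma> * snd \<xi>)) = hh lam (s t)"
          if "0 < \<sigma> * snd \<xi>"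
          using Mx_eq[OF Dne, of "fst \<xi> / (\<sigma> * snd \<xi>)" "lam * y t"] h that
          by (simp add: hh_def ex \<xi>_def y_def)
        then show ?thesis using pc(3) Ne Gx by simp
      qed
      show "(G has_real_derivative G' t) (at t) \<and> 0 \<le> N t \<and> N t \<le> ereal (G' t) \<and>
        ((0 < \<sigma> * snd (xi \<gamma> t) \<longrightarrow> fst (xi \<gamma> t) / (\<sigma> * snd (xi \<gamma> t)) \<in> A (lam * snd (\<gamma> t))) \<longrightarrow> N t = ereal (G' t))"
        using dG' pc(1,2) Ne Gx eqp by simp
    qed
  qed
  have G01: "G 1 - G 0 = HH lam (\<sigma> * ln Y) - HH lam 0 + lam * X"
    using g0 g1 by (simp add: G_def s_def y_def x_def)
  have ae1: "AE t in lebesgue. t \<in> {0..1} \<longrightarrow> (G has_real_derivative G' t) (at t) \<and> 0 \<le> N t \<and> N t \<le> ereal (G' t)"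
    using key by (rule eventually_mono) auto
  show "path_length \<nu> \<gamma> \<le> ennreal (HH lam (\<sigma> * ln Y) - HH lam 0 + lam * X)"
    using CAL_gen(1)[OF Glip ae1] pl G01 by simp
  assume hyp: "AE t in lebesgue. t \<in> {0..1} \<longrightarrow> (0 < \<sigma> * snd (xi \<gamma> t) \<longrightarrow>
            fst (xi \<gamma> t) / (\<sigma> * snd (xi \<gamma> t)) \<in> A (lam * snd (\<gamma> t)))"
  have ae2: "AE t in lebesgue. t \<in> {0..1} \<longrightarrow> N t = ereal (G' t)"
    using key hyp by eventually_elim auto
  show "path_length \<nu> \<gamma> = ennreal (HH lam (\<sigma> * ln Y) - HH lam 0 + lam * X)"
    using CAL_gen(2)[OF Glip ae1 ae2] pl G01 by simp
qed

end

lemma nonneg_zero_AE: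
  fixes f :: "real \<Rightarrow> real"
  assumes int: "(f has_integral 0) {0..1}" and nn: "AE t in lebesgue. t \<in> {0..1} \<longrightarrow> 0 \<le> f t"
  shows "AE t in lebesgue. t \<in> {0..1} \<longrightarrow> f t = 0"
proof -
  from nn obtain N0 where N0: "N0 \<in> null_sets lebesgue"
    and NP: "\<And>t. t \<notin> N0 \<Longrightarrow> t \<in> {0..1} \<Longrightarrow> 0 \<le> f t"
    by (auto elim!: AE_E3)
  have negl: "negligible N0" using N0 negligible_iff_null_sets by blast
  define F where "F t = (if t \<in> {0..1} then max 0 (f t) else 0)" for t
  have Fnn: "0 \<le> F t" for t by (auto simp: F_def)
  have "((\<lambda>t. max 0 (f t)) has_integral 0) {0..1}"
    by (rule has_integral_spike[OF negl _ int]) (use NP in auto)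
  then have "(F has_integral 0) UNIV"
    unfolding F_def by (subst has_integral_restrict_UNIV)
  then have m: "F \<in> borel_measurable lebesgue" and nnF: "(\<integral>\<^sup>+ x. ennreal (F x) \<partial>lebesgue) = 0"
    using has_integral_iff_nn_integral_lebesgue[of F, OF Fnn] by auto
  have "AE t in lebesgue. ennreal (F t) \<le> 0"
    using nnF by (subst (asm) nn_integral_0_iff_AE) (use m in auto)
  then show ?thesis
    using nn
  proof (eventually_elim)
    case (elim t)
    show ?case
    proof
      assume t: "t \<in> {0..1}"
      have "F t \<le> 0" using elim(1) Fnn[of t] by (simp add: ennreal_le_iff2)
      then have "f t \<le> 0" using t by (auto simp: F_def)
      moreover have "0 \<le> f t" using elim(2) t by auto
      ultimately show "f t = 0" by simp
    qed
  qed
qed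

context LS begin

lemma path_calc:
  assumes adm: "admissible C \<gamma>" and Fd: "\<And>s. (F has_real_derivative F' s) (at s)"
    and Fc: "continuous_on UNIV F'"
  shows "\<exists>L. L-lipschitz_on {0..1} (\<lambda>t. F (\<sigma> * ln (snd (\<gamma> t))) + lam * fst (\<gamma> t) + \<kappa> * snd (\<gamma> t))"
   and "AE t in lebesgue. t \<in> {0..1} \<longrightarrow>
     ((\<lambda>t. F (\<sigma> * ln (snd (\<gamma> t))) + lam * fst (\<gamma> t) + \<kappa> * snd (\<gamma> t)) has_real_derivative
       ((\<sigma> * snd (xi \<gamma> t)) * F' (\<sigma> * ln (snd (\<gamma> t))) + lam * (snd (\<gamma> t) * fst (xi \<gamma> t))
         + \<kappa> * (snd (\<gamma> t) * snd (xi \<gamma> t)))) (at t) \<and>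
     xi \<gamma> t \<in> C \<and> nu_at \<nu> (\<gamma> t) (vector_derivative \<gamma> (at t)) = \<nu> (xi \<gamma> t) \<and> 0 < snd (\<gamma> t)"
proof -
  obtain K where K: "K-lipschitz_on {0..1} \<gamma>" using adm_lip[OF adm] by blast
  obtain m M where mM: "0 < m" "\<And>t. t \<in> {0..1} \<Longrightarrow> m \<le> snd (\<gamma> t) \<and> snd (\<gamma> t) \<le> M"
    using adm_bounds[OF adm] by blast
  define y where "y t = snd (\<gamma> t)" for t
  define x where "x t = fst (\<gamma> t)" for t
  define s where "s t = \<sigma> * ln (y t)" for t
  have lnlip: "(1/m)-lipschitz_on {m..M} ln"
  proof (rule deriv_lip[where f'="\<lambda>x. 1/x"])
    fix z assume "z \<in> {m..M}"
    then have "0 < z" using mM(1) by auto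
    then show "(ln has_real_derivative 1 / z) (at z)" by (rule DERIV_ln_divide)
    show "\<bar>1 / z\<bar> \<le> 1 / m" using \<open>0 < z\<close> \<open>z \<in> {m..M}\<close> mM(1) by (auto simp: divide_simps)
  qed (use mM(1) in auto)
  have ylip: "K-lipschitz_on {0..1} y" unfolding y_def by (rule lip_snd[OF K])
  have yim: "y ` {0..1} \<subseteq> {m..M}" using mM(2) by (auto simp: y_def)
  have "((1/m) * K)-lipschitz_on {0..1} (\<lambda>t. ln (y t))"
    by (rule lipschitz_on_compose2[OF ylip lipschitz_on_subset[OF lnlip yim]])
  then have slip: "(\<bar>\<sigma>\<bar> * ((1/m) * K))-lipschitz_on {0..1} s"
    unfolding s_def by (rule lipschitz_on_cmult_real)
  define R0 where "R0 = \<bar>ln m\<bar> + \<bar>ln M\<bar>"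
  have sim: "s ` {0..1} \<subseteq> {-R0..R0}"
  proof
    fix z assume "z \<in> s ` {0..1}"
    then obtain t where t: "t \<in> {0..1}" "z = s t" by auto
    have my: "m \<le> y t" "y t \<le> M" using mM(2)[OF t(1)] by (auto simp: y_def)
    then have "ln m \<le> ln (y t)" "ln (y t) \<le> ln M" using mM(1) by auto
    then have "\<bar>ln (y t)\<bar> \<le> R0" by (auto simp: R0_def abs_le_iff)
    then show "z \<in> {-R0..R0}" using t sig by (auto simp: s_def abs_le_iff)
  qed
  have "compact (F' ` {-R0..R0})"
    by (rule compact_continuous_image) (auto intro: continuous_on_subset[OF Fc])
  then obtain B where B: "\<forall>x\<in>F' ` {-R0..R0}. norm x \<le> B"
    using compact_imp_bounded bounded_iff by metis
  have FL: "(max B 0)-lipschitz_on {-R0..R0} F"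
    by (rule deriv_lip[OF Fd]) (use B in \<open>auto intro: max.coboundedI1\<close>)
  have "(max B 0 * (\<bar>\<sigma>\<bar> * ((1/m) * K)))-lipschitz_on {0..1} (\<lambda>t. F (s t))"
    by (rule lipschitz_on_compose2[OF slip lipschitz_on_subset[OF FL sim]])
  moreover have "(\<bar>lam\<bar> * K)-lipschitz_on {0..1} (\<lambda>t. lam * x t)"
    unfolding x_def by (rule lipschitz_on_cmult_real[OF lip_fst[OF K]])
  moreover have "(\<bar>\<kappa>\<bar> * K)-lipschitz_on {0..1} (\<lambda>t. \<kappa> * y t)"
    by (rule lipschitz_on_cmult_real[OF ylip])
  ultimately have "(max B 0 * (\<bar>\<sigma>\<bar> * ((1/m) * K)) + \<bar>lam\<bar> * K + \<bar>\<kappa>\<bar> * K)-lipschitz_on {0..1}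
      (\<lambda>t. F (s t) + lam * x t + \<kappa> * y t)"
    by (intro lipschitz_on_add)
  then show "\<exists>L. L-lipschitz_on {0..1} (\<lambda>t. F (\<sigma> * ln (snd (\<gamma> t))) + lam * fst (\<gamma> t) + \<kappa> * snd (\<gamma> t))"
    by (auto simp: s_def x_def y_def)
  show "AE t in lebesgue. t \<in> {0..1} \<longrightarrow>
     ((\<lambda>t. F (\<sigma> * ln (snd (\<gamma> t))) + lam * fst (\<gamma> t) + \<kappa> * snd (\<gamma> t)) has_real_derivative
       ((\<sigma> * snd (xi \<gamma> t)) * F' (\<sigma> * ln (snd (\<gamma> t))) + lam * (snd (\<gamma> t) * fst (xi \<gamma> t))
         + \<kappa> * (snd (\<gamma> t) * snd (xi \<gamma> t)))) (at t) \<and>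
     xi \<gamma> t \<in> C \<and> nu_at \<nu> (\<gamma> t) (vector_derivative \<gamma> (at t)) = \<nu> (xi \<gamma> t) \<and> 0 < snd (\<gamma> t)"
    using adm_AE[OF adm, of \<nu>]
  proof eventually_elim
    case (elim t)
    show ?case
    proof
      assume t: "t \<in> {0..1}"
      have yp: "0 < y t" using adm_pos[OF adm t] by (simp add: y_def)
      define \<xi> where "\<xi> = xi \<gamma> t"
      have dx: "(x has_real_derivative y t * fst \<xi>) (at t)"
        and dy: "(y has_real_derivative y t * snd \<xi>) (at t)"
        using elim t by (auto simp: x_def[abs_def] y_def[abs_def] \<xi>_def)
      have dln: "((\<lambda>t. ln (y t)) has_real_derivative 1 / y t * (y t * snd \<xi>)) (at t)"
        by (rule DERIV_chain2[OF DERIV_ln_divide[OF yp] dy])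
      have ds: "(s has_real_derivative \<sigma> * (1 / y t * (y t * snd \<xi>))) (at t)"
        unfolding s_def by (rule DERIV_cmult[OF dln])
      have dH: "((\<lambda>t. F (s t)) has_real_derivative F' (s t) * (\<sigma> * (1 / y t * (y t * snd \<xi>)))) (at t)"
        by (rule DERIV_chain2[OF Fd ds])
      have dG: "((\<lambda>t. F (s t) + lam * x t + \<kappa> * y t) has_real_derivative
          F' (s t) * (\<sigma> * (1 / y t * (y t * snd \<xi>))) + lam * (y t * fst \<xi>) + \<kappa> * (y t * snd \<xi>)) (at t)"
        by (intro DERIV_add dH DERIV_cmult dx dy)
      have "F' (s t) * (\<sigma> * (1 / y t * (y t * snd \<xi>))) + lam * (y t * fst \<xi>) + \<kappa> * (y t * snd \<xi>)
          = (\<sigma> * snd \<xi>) * F' (s t) + lam * (y t * fst \<xi>) + \<kappa> * (y t * snd \<xi>)"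
        using yp by simp
      with dG show "((\<lambda>t. F (\<sigma> * ln (snd (\<gamma> t))) + lam * fst (\<gamma> t) + \<kappa> * snd (\<gamma> t)) has_real_derivative
       ((\<sigma> * snd (xi \<gamma> t)) * F' (\<sigma> * ln (snd (\<gamma> t))) + lam * (snd (\<gamma> t) * fst (xi \<gamma> t))
         + \<kappa> * (snd (\<gamma> t) * snd (xi \<gamma> t)))) (at t) \<and>
     xi \<gamma> t \<in> C \<and> nu_at \<nu> (\<gamma> t) (vector_derivative \<gamma> (at t)) = \<nu> (xi \<gamma> t) \<and> 0 < snd (\<gamma> t)"
        using elim t yp by (simp add: s_def x_def[abs_def] y_def[abs_def] \<xi>_def ac_simps)
    qed
  qed
qed

end

context LS begin

lemma xi_decomp_facts:
  assumes xC: "\<xi> \<in> C"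
  obtains "\<sigma> * snd \<xi> = 0" "\<xi> = 0"
  | u where "0 < \<sigma> * snd \<xi>" "u \<in> D" "fst \<xi> = (\<sigma> * snd \<xi>) * u" "snd \<xi> = (\<sigma> * snd \<xi>) * \<sigma>"
      "\<nu> \<xi> = ereal ((\<sigma> * snd \<xi>) * \<phi> u)"
proof (cases "\<sigma> * snd \<xi> = 0")
  case True
  then show ?thesis using that(1) decomp(2)[OF xC] by auto
next
  case False
  have "0 \<le> \<sigma> * snd \<xi>" using decomp(1)[OF xC] .
  then have rp: "0 < \<sigma> * snd \<xi>" using False by linarith
  define u where "u = fst \<xi> / (\<sigma> * snd \<xi>)"
  have uD: "u \<in> D" using decomp(3)[OF xC rp] by (simp add: u_def)
  have xe: "\<xi> = (\<sigma> * snd \<xi>) *\<^sub>R (u, \<sigma>)" using decomp(4)[OF xC rp] by (simp add: u_def)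
  have "\<nu> \<xi> = ereal ((\<sigma> * snd \<xi>) * \<phi> u)" using nu_D[OF uD] rp xe by (metis less_imp_le)
  moreover have "fst \<xi> = (\<sigma> * snd \<xi>) * u" "snd \<xi> = (\<sigma> * snd \<xi>) * \<sigma>"
    using xe by (metis fst_conv scaleR_Pair real_scaleR_def, metis snd_conv scaleR_Pair real_scaleR_def)
  ultimately show ?thesis using that(2)[OF rp uD] by blast
qed

lemma endpoint:
  assumes Dne: "D \<noteq> {}" and adm: "admissible C \<gamma>" and g0: "\<gamma> 0 = (0,1)" and g1: "\<gamma> 1 = (X, Y)"
    and cD: "c \<in> D" and eps: "\<epsilon> = 1 \<or> \<epsilon> = -1" and ext: "\<And>u. u \<in> D \<Longrightarrow> 0 \<le> \<epsilon> * (u - c)"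
  shows "0 \<le> \<epsilon> * (X - c * \<sigma> * (Y - 1))"
    and "X = c * \<sigma> * (Y - 1) \<Longrightarrow> path_length \<nu> \<gamma> = ennreal (\<phi> c * (\<sigma> * ln Y))"
proof -
  define E where "E t = (\<lambda>s. 0) (\<sigma> * ln (snd (\<gamma> t))) + \<epsilon> * fst (\<gamma> t) + (- \<epsilon> * c * \<sigma>) * snd (\<gamma> t)" for t
  define E' where "E' t = (\<sigma> * snd (xi \<gamma> t)) * 0 + \<epsilon> * (snd (\<gamma> t) * fst (xi \<gamma> t))
         + (- \<epsilon> * c * \<sigma>) * (snd (\<gamma> t) * snd (xi \<gamma> t))" for t
  have pc1: "\<exists>L. L-lipschitz_on {0..1} E"
    using path_calc(1)[OF adm, of "\<lambda>s. 0" "\<lambda>s. 0" \<epsilon> "- \<epsilon> * c * \<sigma>"] by (auto simp: E_def)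
  then obtain LE where LE: "LE-lipschitz_on {0..1} E" by blast
  have pc2: "AE t in lebesgue. t \<in> {0..1} \<longrightarrow> (E has_real_derivative E' t) (at t) \<and>
     xi \<gamma> t \<in> C \<and> nu_at \<nu> (\<gamma> t) (vector_derivative \<gamma> (at t)) = \<nu> (xi \<gamma> t) \<and> 0 < snd (\<gamma> t)"
    using path_calc(2)[OF adm, of "\<lambda>s. 0" "\<lambda>s. 0" \<epsilon> "- \<epsilon> * c * \<sigma>"]
    unfolding E_def[abs_def] E'_def by auto
  have E'eq: "E' t = \<epsilon> * snd (\<gamma> t) * (\<sigma> * snd (xi \<gamma> t)) * (u - c)"
    if "0 < \<sigma> * snd (xi \<gamma> t)" "fst (xi \<gamma> t) = (\<sigma> * snd (xi \<gamma> t)) * u"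
       "snd (xi \<gamma> t) = (\<sigma> * snd (xi \<gamma> t)) * \<sigma>" for t u
  proof -
    have "E' t = \<epsilon> * snd (\<gamma> t) * (fst (xi \<gamma> t) - c * \<sigma> * snd (xi \<gamma> t))"
      by (simp add: E'_def algebra_simps)
    also have "\<dots> = \<epsilon> * snd (\<gamma> t) * ((\<sigma> * snd (xi \<gamma> t)) * u - c * \<sigma> * ((\<sigma> * snd (xi \<gamma> t)) * \<sigma>))"
      using that by (metis (no_types, lifting))
    also have "\<dots> = \<epsilon> * snd (\<gamma> t) * (\<sigma> * snd (xi \<gamma> t)) * (u - c)"
      using sig2 by (simp add: algebra_simps)
    finally show ?thesis .
  qed
  have E'nn: "AE t in lebesgue. t \<in> {0..1} \<longrightarrow> 0 \<le> E' t"
    using pc2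
  proof eventually_elim
    case (elim t)
    show ?case
    proof
      assume t: "t \<in> {0..1}"
      then have xC: "xi \<gamma> t \<in> C" and yp: "0 < snd (\<gamma> t)" using elim by auto
      show "0 \<le> E' t"
      proof (cases rule: xi_decomp_facts[OF xC])
        case 1
        then show ?thesis by (simp add: E'_def zero_prod_def)
      next
        case (2 u)
        have e: "E' t = (\<epsilon> * (u - c)) * (snd (\<gamma> t) * (\<sigma> * snd (xi \<gamma> t)))"
          using E'eq[OF 2(1,3,4)] by (simp add: ac_simps)
        have "0 \<le> snd (\<gamma> t) * (\<sigma> * snd (xi \<gamma> t))" using yp 2(1) by simp
        from mult_nonneg_nonneg[OF ext[OF 2(2)] this] show ?thesis unfolding e .
      qed
    qed
  qed
  have int: "(E' has_integral E 1 - E 0) {0..1}"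
    by (rule lipschitz_FTC[OF LE]) (use pc2 in \<open>auto elim: eventually_mono\<close>)
  have E10: "E 1 - E 0 = \<epsilon> * (X - c * \<sigma> * (Y - 1))"
    using g0 g1 by (simp add: E_def algebra_simps)
  show "0 \<le> \<epsilon> * (X - c * \<sigma> * (Y - 1))"
  proof -
    from E'nn obtain N0 where N0: "N0 \<in> null_sets lebesgue"
      and NP: "\<And>t. t \<notin> N0 \<Longrightarrow> t \<in> {0..1} \<Longrightarrow> 0 \<le> E' t" by (auto elim!: AE_E3)
    have negl: "negligible N0" using N0 negligible_iff_null_sets by blast
    have "((\<lambda>t. max 0 (E' t)) has_integral E 1 - E 0) {0..1}"
      by (rule has_integral_spike[OF negl _ int]) (use NP in auto)
    then have "0 \<le> E 1 - E 0" by (rule has_integral_nonneg) auto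
    then show ?thesis using E10 by simp
  qed
  assume Xeq: "X = c * \<sigma> * (Y - 1)"
  then have "(E' has_integral 0) {0..1}" using int E10 by simp
  from nonneg_zero_AE[OF this E'nn] have E'0: "AE t in lebesgue. t \<in> {0..1} \<longrightarrow> E' t = 0" .
  define Lf where "Lf t = (\<lambda>s. \<phi> c * s) (\<sigma> * ln (snd (\<gamma> t))) + 0 * fst (\<gamma> t) + 0 * snd (\<gamma> t)" for t
  define Lf' where "Lf' t = (\<sigma> * snd (xi \<gamma> t)) * \<phi> c + 0 * (snd (\<gamma> t) * fst (xi \<gamma> t))
         + 0 * (snd (\<gamma> t) * snd (xi \<gamma> t))" for t
  have dphi: "((\<lambda>s. \<phi> c * s) has_real_derivative \<phi> c) (at s)" for s
    by (rule DERIV_cmult_Id)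
  obtain LL where LL: "LL-lipschitz_on {0..1} Lf"
    using path_calc(1)[OF adm dphi, of "0" "0"] by (auto simp: Lf_def)
  have pc3: "AE t in lebesgue. t \<in> {0..1} \<longrightarrow> (Lf has_real_derivative Lf' t) (at t) \<and>
     xi \<gamma> t \<in> C \<and> nu_at \<nu> (\<gamma> t) (vector_derivative \<gamma> (at t)) = \<nu> (xi \<gamma> t) \<and> 0 < snd (\<gamma> t)"
    using path_calc(2)[OF adm dphi, of "0" "0"] unfolding Lf_def[abs_def] Lf'_def by auto
  define N where "N t = nu_at \<nu> (\<gamma> t) (vector_derivative \<gamma> (at t))" for t
  have key: "AE t in lebesgue. t \<in> {0..1} \<longrightarrow> (Lf has_real_derivative Lf' t) (at t) \<and> 0 \<le> N t \<and> N t \<le> ereal (Lf' t)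
      \<and> N t = ereal (Lf' t)"
    using pc3 E'0
  proof eventually_elim
    case (elim t)
    show ?case
    proof
      assume t: "t \<in> {0..1}"
      then have xC: "xi \<gamma> t \<in> C" and yp: "0 < snd (\<gamma> t)" and Ne: "N t = \<nu> (xi \<gamma> t)"
        and d: "(Lf has_real_derivative Lf' t) (at t)" using elim by (auto simp: N_def)
      have eq: "N t = ereal (Lf' t)"
      proof (cases rule: xi_decomp_facts[OF xC])
        case 1
        then show ?thesis using Ne by (simp add: Lf'_def nu_zero zero_ereal_def)
      next
        case (2 u)
        have "E' t = 0" using elim t by auto
        then have "(\<epsilon> * (u - c)) * (snd (\<gamma> t) * (\<sigma> * snd (xi \<gamma> t))) = 0"
          using E'eq[OF 2(1,3,4)] by (simp add: ac_simps)
        moreover have "snd (\<gamma> t) * (\<sigma> * snd (xi \<gamma> t)) \<noteq> 0"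
          using yp 2(1) by (metis less_irrefl mult_pos_pos)
        ultimately have "\<epsilon> * (u - c) = 0" by simp
        then have "u = c" using eps by auto
        then show ?thesis using 2(5) Ne by (simp add: Lf'_def)
      qed
      have "0 \<le> N t" using Ne nu_props(3)[OF xC] by simp
      then show "(Lf has_real_derivative Lf' t) (at t) \<and> 0 \<le> N t \<and> N t \<le> ereal (Lf' t) \<and> N t = ereal (Lf' t)"
        using d eq by simp
    qed
  qed
  have "path_length \<nu> \<gamma> = ennreal (Lf 1 - Lf 0)"
    unfolding path_length_def N_def[symmetric]
    by (rule CAL_gen(2)[OF LL]) (use key in \<open>auto elim: eventually_mono\<close>)
  also have "Lf 1 - Lf 0 = \<phi> c * (\<sigma> * ln Y)" using g0 g1 by (simp add: Lf_def)
  finally show "path_length \<nu> \<gamma> = ennreal (\<phi> c * (\<sigma> * ln Y))" .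
qed

end

context LS begin

lemma Up_anti: "D \<noteq> {} \<Longrightarrow> \<mu>1 \<le> \<mu>2 \<Longrightarrow> Up \<mu>2 \<le> Up \<mu>1"
  using A_mono[of \<mu>1 \<mu>2 "Up \<mu>1" "Up \<mu>2"] Up_in[of \<mu>1] Up_in[of \<mu>2] by (cases "\<mu>1 = \<mu>2") auto
lemma Um_anti: "D \<noteq> {} \<Longrightarrow> \<mu>1 \<le> \<mu>2 \<Longrightarrow> Um \<mu>2 \<le> Um \<mu>1"
  using A_mono[of \<mu>1 \<mu>2 "Um \<mu>1" "Um \<mu>2"] Um_in[of \<mu>1] Um_in[of \<mu>2] by (cases "\<mu>1 = \<mu>2") auto
lemma Up_Um: "D \<noteq> {} \<Longrightarrow> \<mu>1 < \<mu>2 \<Longrightarrow> Up \<mu>2 \<le> Um \<mu>1"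
  by (auto intro: A_mono Um_in Up_in)

lemma PL_left:
  assumes Dne: "D \<noteq> {}" and lt: "\<And>n. m n < \<mu>" and inc: "\<And>n k. n \<le> k \<Longrightarrow> m n \<le> m k"
    and lim: "m \<longlonglongrightarrow> \<mu>"
  shows "(\<lambda>n. Up (m n)) \<longlonglongrightarrow> Up \<mu>"
proof -
  have dec: "antimono_on UNIV (\<lambda>n. Up (m n))"
    by (auto simp: monotone_on_def intro!: Up_anti[OF Dne] inc)
  have lb: "\<forall>i. Up \<mu> \<le> Up (m i)" using Up_anti[OF Dne] lt less_imp_le by blast
  obtain L where L: "(\<lambda>n. Up (m n)) \<longlonglongrightarrow> L" using decseq_convergent[OF dec lb] by blast
  have "L \<in> A \<mu>" by (rule A_graph[OF _ L lim]) (rule Up_in[OF Dne])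
  then have "L \<le> Up \<mu>" by (rule Up_ge)
  moreover have "Up \<mu> \<le> L" using L lb by (intro LIMSEQ_le_const) auto
  ultimately show ?thesis using L by simp
qed

lemma PL_right:
  assumes Dne: "D \<noteq> {}" and gt: "\<And>n. \<mu> < m n" and dec: "\<And>n k. n \<le> k \<Longrightarrow> m k \<le> m n"
    and lim: "m \<longlonglongrightarrow> \<mu>"
  shows "(\<lambda>n. Up (m n)) \<longlonglongrightarrow> Um \<mu>"
proof -
  have inc: "incseq (\<lambda>n. Up (m n))"
    by (auto simp: monotone_on_def intro!: Up_anti[OF Dne] dec)
  have ub: "\<forall>i. Up (m i) \<le> Um \<mu>" using Up_Um[OF Dne] gt by blast
  obtain L where L: "(\<lambda>n. Up (m n)) \<longlonglongrightarrow> L" using incseq_convergent[OF inc ub] by blast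
  have "L \<in> A \<mu>" by (rule A_graph[OF _ L lim]) (rule Up_in[OF Dne])
  then have "Um \<mu> \<le> L" by (rule Um_le)
  moreover have "L \<le> Um \<mu>" using L ub by (intro LIMSEQ_le_const2) auto
  ultimately show ?thesis using L by simp
qed

lemma U_bounds_neg:
  assumes Dne: "D \<noteq> {}" and bD: "b \<in> D" and Bp: "\<And>u. u \<in> D \<Longrightarrow> \<phi> u \<le> Bp" and u: "u \<in> A \<mu>" and neg: "\<mu> < 0"
  shows "b - Bp / (- \<mu>) \<le> u"
proof -
  have "\<phi> b - \<mu> * b \<le> \<phi> u - \<mu> * u" using u bD by (auto simp: A_def)
  moreover have "\<phi> u \<le> Bp" "0 \<le> \<phi> b" using u A_sub Bp phi_nonneg bD by auto
  ultimately have "(- \<mu>) * (b - u) \<le> Bp" by (simp add: algebra_simps)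
  then have "b - u \<le> Bp / (- \<mu>)" using neg by (subst pos_le_divide_eq) (auto simp: mult.commute)
  then show ?thesis by simp
qed

lemma U_bounds_pos:
  assumes Dne: "D \<noteq> {}" and aD: "a \<in> D" and Bp: "\<And>u. u \<in> D \<Longrightarrow> \<phi> u \<le> Bp" and u: "u \<in> A \<mu>" and pos: "0 < \<mu>"
  shows "u \<le> a + Bp / \<mu>"
proof -
  have "\<phi> a - \<mu> * a \<le> \<phi> u - \<mu> * u" using u aD by (auto simp: A_def)
  moreover have "\<phi> u \<le> Bp" "0 \<le> \<phi> a" using u A_sub Bp phi_nonneg aD by auto
  ultimately have "\<mu> * (u - a) \<le> Bp" by (simp add: algebra_simps)
  then have "u - a \<le> Bp / \<mu>" using pos by (simp add: pos_le_divide_eq mult.commute)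
  then show ?thesis by simp
qed

end

lemma k_mono:
  fixes lam l t1 t2 :: real
  assumes "t1 \<le> t2"
  shows "0 \<le> lam * l \<Longrightarrow> lam * exp (l * t1) \<le> lam * exp (l * t2)"
    and "lam * l \<le> 0 \<Longrightarrow> lam * exp (l * t2) \<le> lam * exp (l * t1)"
proof -
  assume "0 \<le> lam * l"
  then consider "0 \<le> lam" "0 \<le> l" | "lam \<le> 0" "l \<le> 0" by (auto simp: zero_le_mult_iff)
  then show "lam * exp (l * t1) \<le> lam * exp (l * t2)"
  proof cases
    case 1
    then have "l * t1 \<le> l * t2" using assms by (intro mult_left_mono)
    then show ?thesis using 1 by (intro mult_left_mono) auto
  next
    case 2
    then have "l * t2 \<le> l * t1" using assms by (intro mult_left_mono_neg)
    then show ?thesis using 2 by (intro mult_left_mono_neg) auto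
  qed
next
  assume "lam * l \<le> 0"
  then consider "0 \<le> lam" "l \<le> 0" | "lam \<le> 0" "0 \<le> l" by (auto simp: mult_le_0_iff)
  then show "lam * exp (l * t2) \<le> lam * exp (l * t1)"
  proof cases
    case 1
    then have "l * t2 \<le> l * t1" using assms by (intro mult_left_mono_neg)
    then show ?thesis using 1 by (intro mult_left_mono) auto
  next
    case 2
    then have "l * t1 \<le> l * t2" using assms by (intro mult_left_mono)
    then show ?thesis using 2 by (intro mult_left_mono_neg) auto
  qed
qed

lemma int_abs: "integrable (lebesgue_on S) f \<Longrightarrow> S \<in> sets lebesgue \<Longrightarrow> f absolutely_integrable_on S"
  by (simp add: absolutely_integrable_on_def set_integrable_def integrable_restrict_space)

lemma integ_U:
  fixes U :: "real \<Rightarrow> real"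
  assumes anti: "\<And>\<mu>1 \<mu>2. \<mu>1 \<le> \<mu>2 \<Longrightarrow> U \<mu>2 \<le> U \<mu>1"
  shows "(\<lambda>t. c * exp (l * t) * U (lam * exp (l * t))) integrable_on {a..b}"
proof -
  define f where "f t = U (lam * exp (l * t))" for t
  have "integrable (lebesgue_on {a..b}) f"
  proof (cases "0 \<le> lam * l")
    case True
    have "mono_on {a..b} (\<lambda>t. - f t)"
    proof (rule mono_onI)
      fix r s assume "r \<in> {a..b}" "s \<in> {a..b}" "r \<le> s"
      then have "lam * exp (l * r) \<le> lam * exp (l * s)" using k_mono(1)[OF _ True] by blast
      then show "- f r \<le> - f s" unfolding f_def using anti by simp
    qed
    then have "integrable (lebesgue_on {a..b}) (\<lambda>t. - f t)" by (rule integrable_mono_on)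
    then show ?thesis by simp
  next
    case False
    then have F: "lam * l \<le> 0" by simp
    have "mono_on {a..b} f"
    proof (rule mono_onI)
      fix r s assume "r \<in> {a..b}" "s \<in> {a..b}" "r \<le> s"
      then have "lam * exp (l * s) \<le> lam * exp (l * r)" using k_mono(2)[OF _ F] by blast
      then show "f r \<le> f s" unfolding f_def using anti by simp
    qed
    then show ?thesis by (rule integrable_mono_on)
  qed
  then have fa: "f absolutely_integrable_on {a..b}" by (rule int_abs) auto
  have wc: "continuous_on {a..b} (\<lambda>t. c * exp (l * t))" by (intro continuous_intros)
  have wm: "(\<lambda>t. c * exp (l * t)) \<in> borel_measurable (lebesgue_on {a..b})"
    by (rule continuous_imp_measurable_on_sets_lebesgue[OF wc]) auto
  have wb: "bounded ((\<lambda>t. c * exp (l * t)) ` {a..b})"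
    by (rule compact_imp_bounded[OF compact_continuous_image[OF wc]]) auto
  have "(\<lambda>t. c * exp (l * t) * f t) absolutely_integrable_on {a..b}"
    by (rule absolutely_integrable_bounded_measurable_product_real[OF wm _ wb fa]) auto
  then show ?thesis
    unfolding f_def using absolutely_integrable_on_def set_lebesgue_integral_eq_integral(1) by blast
qed


context LS begin

definition Fp where "Fp l lam = integral {0..1} (\<lambda>t. (\<sigma> * l) * exp (l * t) * Up (lam * exp (l * t)))"
definition Fm where "Fm l lam = integral {0..1} (\<lambda>t. (\<sigma> * l) * exp (l * t) * Um (lam * exp (l * t)))"

lemma Up_anti': "D \<noteq> {} \<Longrightarrow> (\<And>\<mu>1 \<mu>2. \<mu>1 \<le> \<mu>2 \<Longrightarrow> Up \<mu>2 \<le> Up \<mu>1)" using Up_anti by blast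
lemma Um_anti': "D \<noteq> {} \<Longrightarrow> (\<And>\<mu>1 \<mu>2. \<mu>1 \<le> \<mu>2 \<Longrightarrow> Um \<mu>2 \<le> Um \<mu>1)" using Um_anti by blast

lemma intUp: "D \<noteq> {} \<Longrightarrow> (\<lambda>t. c * exp (l * t) * Up (lam * exp (l * t))) integrable_on {a..b}"
  by (rule integ_U[OF Up_anti']) auto
lemma intUm: "D \<noteq> {} \<Longrightarrow> (\<lambda>t. c * exp (l * t) * Um (lam * exp (l * t))) integrable_on {a..b}"
  by (rule integ_U[OF Um_anti']) auto

lemma w_int: "((\<lambda>t. (\<sigma> * l) * exp (l * t)) has_integral \<sigma> * (exp l - 1)) {0..1}"
proof -
  have "((\<lambda>t. (\<sigma> * l) * exp (l * t)) has_integral (\<sigma> * exp (l * 1) - \<sigma> * exp (l * 0))) {0..1}"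
  proof (rule fundamental_theorem_of_calculus)
    fix t :: real assume "t \<in> {0..1}"
    have "((\<lambda>t. \<sigma> * exp (l * t)) has_real_derivative \<sigma> * (exp (l * t) * (l * 1))) (at t)"
      by (intro derivative_eq_intros) auto
    then show "((\<lambda>t. \<sigma> * exp (l * t)) has_vector_derivative (\<sigma> * l) * exp (l * t)) (at t within {0..1})"
      by (auto simp: has_real_derivative_iff_has_vector_derivative[symmetric] algebra_simps
               intro: has_field_derivative_at_within)
  qed simp
  then show ?thesis by (simp add: algebra_simps)
qed

lemma w_const_int: "((\<lambda>t. (\<sigma> * l) * exp (l * t) * k) has_integral (\<sigma> * (exp l - 1)) * k) {0..1}"
  using has_integral_mult_left[OF w_int] by simp

lemma U_D: "D \<noteq> {} \<Longrightarrow> Up \<mu> \<in> D" "D \<noteq> {} \<Longrightarrow> Um \<mu> \<in> D"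
  using Up_in Um_in A_sub by auto

lemma Fm_le_Fp:
  assumes Dne: "D \<noteq> {}" and sl: "0 \<le> \<sigma> * l"
  shows "Fm l lam \<le> Fp l lam"
  unfolding Fm_def Fp_def
  by (rule integral_le[OF intUm[OF Dne] intUp[OF Dne]])
     (use sl Um_le_Up[OF Dne] in \<open>auto intro!: mult_left_mono\<close>)

lemma Fp_anti:
  assumes Dne: "D \<noteq> {}" and sl: "0 \<le> \<sigma> * l" and le: "lam \<le> lam'"
  shows "Fp l lam' \<le> Fp l lam"
  unfolding Fp_def
  by (rule integral_le[OF intUp[OF Dne] intUp[OF Dne]])
     (use sl le in \<open>auto intro!: mult_left_mono Up_anti[OF Dne] mult_right_mono\<close>)

lemma F_lim:
  assumes Dne: "D \<noteq> {}"
    and conv: "\<And>t. t \<in> {0..1} \<Longrightarrow> (\<lambda>n. Up (lamn n * exp (l * t))) \<longlonglongrightarrow> U (lam * exp (l * t))"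
    and Uint: "(\<lambda>t. (\<sigma> * l) * exp (l * t) * U (lam * exp (l * t))) integrable_on {0..1}"
  shows "(\<lambda>n. Fp l (lamn n)) \<longlonglongrightarrow> integral {0..1} (\<lambda>t. (\<sigma> * l) * exp (l * t) * U (lam * exp (l * t)))"
proof -
  obtain R where R: "0 \<le> R" "\<And>u. u \<in> D \<Longrightarrow> \<bar>u\<bar> \<le> R" using D_R by blast
  define W where "W = \<bar>\<sigma> * l\<bar> * exp \<bar>l\<bar>"
  have bnd: "norm ((\<sigma> * l) * exp (l * t) * Up (lamn k * exp (l * t))) \<le> W * R" if t: "t \<in> {0..1}" for k t
  proof -
    have "exp (l * t) \<le> exp \<bar>l\<bar>"
    proof -
      have "\<bar>l * t\<bar> \<le> \<bar>l\<bar>" using t by (simp add: abs_mult mult_left_le)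
      then have "l * t \<le> \<bar>l\<bar>" by linarith
      then show ?thesis by simp
    qed
    have "norm ((\<sigma> * l) * exp (l * t) * Up (lamn k * exp (l * t))) = \<bar>\<sigma> * l\<bar> * exp (l * t) * \<bar>Up (lamn k * exp (l * t))\<bar>"
      by (simp add: abs_mult)
    also have "\<dots> \<le> \<bar>\<sigma> * l\<bar> * exp \<bar>l\<bar> * R"
      using \<open>exp (l * t) \<le> exp \<bar>l\<bar>\<close> R(2)[OF U_D(1)[OF Dne]] R(1)
      by (intro mult_mono mult_left_mono) auto
    finally show ?thesis by (simp add: W_def)
  qed
  have "(\<lambda>n. integral {0..1} (\<lambda>t. (\<sigma> * l) * exp (l * t) * Up (lamn n * exp (l * t)))) \<longlonglongrightarrow>
        integral {0..1} (\<lambda>t. (\<sigma> * l) * exp (l * t) * U (lam * exp (l * t)))"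
    by (rule dominated_convergence(2)[where h="\<lambda>_. W * R", OF intUp[OF Dne] integrable_const_ivl bnd])
       (auto intro!: tendsto_mult_left conv)
  then show ?thesis by (simp add: Fp_def)
qed

end

context LS begin

lemma D_inf_sup: "D \<noteq> {} \<Longrightarrow> Inf D \<in> D" "D \<noteq> {} \<Longrightarrow> Sup D \<in> D"
  "u \<in> D \<Longrightarrow> Inf D \<le> u" "u \<in> D \<Longrightarrow> u \<le> Sup D"
  using closed_contains_Inf[OF _ bounded_imp_bdd_below[OF D_bounded] D_closed]
    closed_contains_Sup[OF _ bounded_imp_bdd_above[OF D_bounded] D_closed]
    cInf_lower[OF _ bounded_imp_bdd_below[OF D_bounded]] cSup_upper[OF _ bounded_imp_bdd_above[OF D_bounded]]
  by auto

lemma inv_lim: "(\<lambda>n. c - inverse (real (Suc n))) \<longlonglongrightarrow> c" "(\<lambda>n. c + inverse (real (Suc n))) \<longlonglongrightarrow> c"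
  using tendsto_diff[OF tendsto_const LIMSEQ_inverse_real_of_nat, of c]
    tendsto_add[OF tendsto_const LIMSEQ_inverse_real_of_nat, of c] by auto

lemma inv_mono: "n \<le> k \<Longrightarrow> inverse (real (Suc k)) \<le> inverse (real (Suc n))"
  by (simp add: le_imp_inverse_le)

lemma lam_exists:
  assumes Dne: "D \<noteq> {}" and sl: "0 < \<sigma> * l"
    and aX: "Inf D * (\<sigma> * (exp l - 1)) < X" and Xb: "X < Sup D * (\<sigma> * (exp l - 1))"
  shows "\<exists>lam. Fm l lam \<le> X \<and> X \<le> Fp l lam"
proof -
  define I where "I = \<sigma> * (exp l - 1)"
  define a where "a = Inf D"
  define b where "b = Sup D"
  have aD: "a \<in> D" and bD: "b \<in> D" and ab: "a \<le> b" using D_inf_sup Dne by (auto simp: a_def b_def)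
  have Ip: "0 < I"
  proof (rule ccontr)
    assume "\<not> 0 < I"
    then have "b * I \<le> a * I" using ab by (simp add: mult_right_mono_neg)
    then show False using aX Xb by (simp add: a_def b_def I_def)
  qed
  define Bp where "Bp = Mx 0"
  have Bp: "\<And>u. u \<in> D \<Longrightarrow> \<phi> u \<le> Bp" using Mx_ge[OF Dne, of _ 0] by (simp add: Bp_def)
  have Bp0: "0 \<le> Bp" using Bp[OF aD] phi_nonneg[OF aD] by simp
  define gm where "gm = exp (min 0 l)"
  have gm0: "0 < gm" by (simp add: gm_def)
  have gmle: "gm \<le> exp (l * t)" if "t \<in> {0..1}" for t
  proof -
    have "min 0 l \<le> l * t"
    proof (cases "0 \<le> l")
      case True then show ?thesis using that by simp
    next
      case False
      then have "l * 1 \<le> l * t" using that by (intro mult_left_mono_neg) auto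
      then show ?thesis by simp
    qed
    then show ?thesis by (simp add: gm_def)
  qed
  have wnn: "0 \<le> (\<sigma> * l) * exp (l * t)" for t using sl by simp
  define \<delta> where "\<delta> = (b * I - X) / I"
  have \<delta>0: "0 < \<delta>" using Xb Ip by (simp add: \<delta>_def I_def b_def field_simps)
  define lamN where "lamN = - (Bp / (gm * \<delta>) + 1)"
  have UmN: "b - \<delta> \<le> Um (lamN * exp (l * t))" if t: "t \<in> {0..1}" for t
  proof -
    define \<mu> where "\<mu> = lamN * exp (l * t)"
    have "(Bp / (gm * \<delta>) + 1) * gm \<le> (Bp / (gm * \<delta>) + 1) * exp (l * t)"
      using gmle[OF t] Bp0 gm0 \<delta>0 by (intro mult_left_mono) auto
    moreover have "(Bp / (gm * \<delta>) + 1) * gm = Bp / \<delta> + gm" using gm0 \<delta>0 by (simp add: field_simps)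
    moreover have "- \<mu> = (Bp / (gm * \<delta>) + 1) * exp (l * t)" by (simp add: \<mu>_def lamN_def algebra_simps)
    ultimately have m1: "Bp / \<delta> + gm \<le> - \<mu>" by linarith
    then have neg: "\<mu> < 0" using gm0 Bp0 \<delta>0 by (smt (verit) divide_nonneg_pos)
    have "Bp \<le> \<delta> * (- \<mu>)"
    proof -
      have "Bp = \<delta> * (Bp / \<delta>)" using \<delta>0 by simp
      also have "\<dots> \<le> \<delta> * (- \<mu>)" using m1 gm0 \<delta>0 by (intro mult_left_mono) auto
      finally show ?thesis .
    qed
    then have "Bp / (- \<mu>) \<le> \<delta>" using neg by (subst divide_le_eq) (auto simp: mult.commute)
    moreover have "b - Bp / (- \<mu>) \<le> Um \<mu>" by (rule U_bounds_neg[OF Dne bD Bp Um_in[OF Dne] neg])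
    ultimately show ?thesis by (simp add: \<mu>_def)
  qed
  have "X \<le> Fm l lamN"
  proof -
    have h1: "((\<lambda>t. (\<sigma> * l) * exp (l * t) * (b - \<delta>)) has_integral I * (b - \<delta>)) {0..1}"
      using w_const_int[of l "b - \<delta>"] by (simp add: I_def)
    have le: "(\<sigma> * l) * exp (l * t) * (b - \<delta>) \<le> (\<sigma> * l) * exp (l * t) * Um (lamN * exp (l * t))"
      if "t \<in> {0..1}" for t using UmN[OF that] wnn[of t] by (intro mult_left_mono) auto
    have "I * (b - \<delta>) \<le> integral {0..1} (\<lambda>t. (\<sigma> * l) * exp (l * t) * Um (lamN * exp (l * t)))"
      by (rule has_integral_le[OF h1 integrable_integral[OF intUm[OF Dne]] le])
    moreover have "I * (b - \<delta>) = X" using Ip by (simp add: \<delta>_def field_simps)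
    ultimately have "X \<le> integral {0..1} (\<lambda>t. (\<sigma> * l) * exp (l * t) * Um (lamN * exp (l * t)))"
      by simp
    then show ?thesis by (simp add: Fm_def)
  qed
  then have LN: "X \<le> Fp l lamN" using Fm_le_Fp[OF Dne, of l lamN] sl by simp
  define \<delta>' where "\<delta>' = (X - a * I) / I"
  have \<delta>'0: "0 < \<delta>'" using aX Ip by (simp add: \<delta>'_def I_def a_def field_simps)
  define lamP where "lamP = 2 * Bp / (gm * \<delta>') + 1"
  have UpP: "Up (lam * exp (l * t)) \<le> a + \<delta>' / 2" if t: "t \<in> {0..1}" and ll: "lamP \<le> lam" for t lam
  proof -
    define \<mu> where "\<mu> = lam * exp (l * t)"
    have "0 \<le> 2 * Bp / (gm * \<delta>')" using Bp0 gm0 \<delta>'0 by simp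
    then have "0 \<le> lam" using ll by (simp add: lamP_def)
    then have "lamP * gm \<le> lam * exp (l * t)"
      using gmle[OF t] gm0 ll by (intro mult_mono) auto
    moreover have "lamP * gm = 2 * Bp / \<delta>' + gm" using gm0 \<delta>'0 by (simp add: lamP_def field_simps)
    ultimately have m1: "2 * Bp / \<delta>' + gm \<le> \<mu>" by (simp add: \<mu>_def)
    then have pos: "0 < \<mu>" using gm0 Bp0 \<delta>'0 by (smt (verit) divide_nonneg_pos)
    have "Bp \<le> \<delta>' / 2 * \<mu>"
    proof -
      have "Bp = \<delta>' / 2 * (2 * Bp / \<delta>')" using \<delta>'0 by simp
      also have "\<dots> \<le> \<delta>' / 2 * \<mu>" using m1 gm0 \<delta>'0 by (intro mult_left_mono) auto
      finally show ?thesis .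
    qed
    then have "Bp / \<mu> \<le> \<delta>' / 2" using pos by (simp add: divide_le_eq)
    moreover have "Up \<mu> \<le> a + Bp / \<mu>" by (rule U_bounds_pos[OF Dne aD Bp Up_in[OF Dne] pos])
    ultimately have "Up \<mu> \<le> a + \<delta>' / 2" by linarith
    then show ?thesis by (simp add: \<mu>_def)
  qed
  have LP: "Fp l lam < X" if "lamP \<le> lam" for lam
  proof -
    have h1: "((\<lambda>t. (\<sigma> * l) * exp (l * t) * (a + \<delta>' / 2)) has_integral I * (a + \<delta>' / 2)) {0..1}"
      using w_const_int[of l "a + \<delta>' / 2"] by (simp add: I_def)
    have le: "(\<sigma> * l) * exp (l * t) * Up (lam * exp (l * t)) \<le> (\<sigma> * l) * exp (l * t) * (a + \<delta>' / 2)"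
      if "t \<in> {0..1}" for t using UpP[OF that \<open>lamP \<le> lam\<close>] wnn[of t] by (intro mult_left_mono) auto
    have "integral {0..1} (\<lambda>t. (\<sigma> * l) * exp (l * t) * Up (lam * exp (l * t))) \<le> I * (a + \<delta>' / 2)"
      by (rule has_integral_le[OF integrable_integral[OF intUp[OF Dne]] h1 le])
    moreover have "I * (a + \<delta>' / 2) < X" using Ip \<delta>'0 by (simp add: \<delta>'_def field_simps)
    ultimately show ?thesis by (simp add: Fp_def)
  qed
  define \<Lambda> where "\<Lambda> = {lam. X \<le> Fp l lam}"
  have Lne: "\<Lambda> \<noteq> {}" using LN by (auto simp: \<Lambda>_def)
  have Lbdd: "bdd_above \<Lambda>"
  proof
    fix x assume "x \<in> \<Lambda>"
    then show "x \<le> lamP" using LP[of x] by (force simp: \<Lambda>_def)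
  qed
  define lam0 where "lam0 = Sup \<Lambda>"
  have A: "X \<le> Fp l lam0"
  proof -
    define lamn where "lamn n = lam0 - inverse (real (Suc n))" for n
    have ge: "X \<le> Fp l (lamn n)" for n
    proof -
      have "lamn n < lam0" by (simp add: lamn_def)
      then obtain x where x: "x \<in> \<Lambda>" "lamn n < x" using less_cSup_iff[OF Lne Lbdd] by (auto simp: lam0_def)
      then have "Fp l x \<le> Fp l (lamn n)" using Fp_anti[OF Dne, of l "lamn n" x] sl by auto
      then show ?thesis using x by (auto simp: \<Lambda>_def)
    qed
    have "(\<lambda>n. Fp l (lamn n)) \<longlonglongrightarrow> integral {0..1} (\<lambda>t. (\<sigma> * l) * exp (l * t) * Up (lam0 * exp (l * t)))"
    proof (rule F_lim[OF Dne _ intUp[OF Dne]])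
      fix t :: real assume t: "t \<in> {0..1}"
      show "(\<lambda>n. Up (lamn n * exp (l * t))) \<longlonglongrightarrow> Up (lam0 * exp (l * t))"
      proof (rule PL_left[OF Dne])
        show "lamn n * exp (l * t) < lam0 * exp (l * t)" for n by (simp add: lamn_def)
        show "lamn n * exp (l * t) \<le> lamn k * exp (l * t)" if "n \<le> k" for n k
          using inv_mono[OF that] by (simp add: lamn_def)
        show "(\<lambda>n. lamn n * exp (l * t)) \<longlonglongrightarrow> lam0 * exp (l * t)"
          unfolding lamn_def by (intro tendsto_intros inv_lim)
      qed
    qed
    then have "(\<lambda>n. Fp l (lamn n)) \<longlonglongrightarrow> Fp l lam0" by (simp add: Fp_def)
    then show ?thesis using ge by (intro LIMSEQ_le_const) auto
  qed
  have B: "Fm l lam0 \<le> X"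
  proof -
    define lamn where "lamn n = lam0 + inverse (real (Suc n))" for n
    have lt: "Fp l (lamn n) < X" for n
    proof -
      have "lam0 < lamn n" by (simp add: lamn_def)
      then have "lamn n \<notin> \<Lambda>" using cSup_upper[OF _ Lbdd] by (force simp: lam0_def)
      then show ?thesis by (auto simp: \<Lambda>_def)
    qed
    have "(\<lambda>n. Fp l (lamn n)) \<longlonglongrightarrow> integral {0..1} (\<lambda>t. (\<sigma> * l) * exp (l * t) * Um (lam0 * exp (l * t)))"
    proof (rule F_lim[OF Dne _ intUm[OF Dne]])
      fix t :: real assume t: "t \<in> {0..1}"
      show "(\<lambda>n. Up (lamn n * exp (l * t))) \<longlonglongrightarrow> Um (lam0 * exp (l * t))"
      proof (rule PL_right[OF Dne])
        show "lam0 * exp (l * t) < lamn n * exp (l * t)" for n by (simp add: lamn_def)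
        show "lamn k * exp (l * t) \<le> lamn n * exp (l * t)" if "n \<le> k" for n k
          using inv_mono[OF that] by (simp add: lamn_def)
        show "(\<lambda>n. lamn n * exp (l * t)) \<longlonglongrightarrow> lam0 * exp (l * t)"
          unfolding lamn_def by (intro tendsto_intros inv_lim)
      qed
    qed
    then have "(\<lambda>n. Fp l (lamn n)) \<longlonglongrightarrow> Fm l lam0" by (simp add: Fm_def)
    then show ?thesis using lt by (intro LIMSEQ_le_const2) (auto intro: less_imp_le)
  qed
  show ?thesis using A B by blast
qed

end

lemma countable_negl: "countable S \<Longrightarrow> negligible S"
proof -
  assume "countable S"
  then have "negligible (\<Union> ((\<lambda>x. {x}) ` S))" by (intro negligible_countable_Union) auto
  then show ?thesis by simp
qed

lemma exp_le_abs: fixes l t :: real shows "t \<in> {0..1} \<Longrightarrow> exp (l * t) \<le> exp \<bar>l\<bar>"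
proof -
  assume t: "t \<in> {0..1}"
  have "\<bar>t\<bar> \<le> 1" using t by auto
  then have "\<bar>l\<bar> * \<bar>t\<bar> \<le> \<bar>l\<bar>" by (simp add: mult_left_le)
  then have "\<bar>l * t\<bar> \<le> \<bar>l\<bar>" by (simp add: abs_mult)
  then have "l * t \<le> \<bar>l\<bar>" by linarith
  then show ?thesis by simp
qed

lemma anti_disc_countable:
  fixes U :: "real \<Rightarrow> real"
  assumes anti: "\<And>\<mu>1 \<mu>2. \<mu>1 \<le> \<mu>2 \<Longrightarrow> U \<mu>2 \<le> U \<mu>1"
  shows "countable {t. \<not> isCont (\<lambda>t. U (lam * exp (l * t))) t}"
proof -
  have "mono (\<lambda>\<mu>. - U \<mu>)" by (auto simp: mono_def intro: anti)
  then have c: "countable {a. \<not> isCont (\<lambda>\<mu>. - U \<mu>) a}" by (rule mono_ctble_discont)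
  have e: "isCont (\<lambda>\<mu>. - U \<mu>) a \<longleftrightarrow> isCont U a" for a
    using isCont_minus[of a "\<lambda>\<mu>. - U \<mu>"] isCont_minus[of a U] by auto
  have cU: "countable {a. \<not> isCont U a}" using c by (simp add: e)
  show ?thesis
  proof (cases "lam = 0 \<or> l = 0")
    case True
    then have "{t. \<not> isCont (\<lambda>t. U (lam * exp (l * t))) t} = {}" by auto
    then show ?thesis by simp
  next
    case False
    define ginv where "ginv \<mu> = ln (\<mu> / lam) / l" for \<mu>
    have "{t. \<not> isCont (\<lambda>t. U (lam * exp (l * t))) t} \<subseteq> ginv ` {a. \<not> isCont U a}"
    proof
      fix t assume "t \<in> {t. \<not> isCont (\<lambda>t. U (lam * exp (l * t))) t}"
      then have nc: "\<not> isCont (\<lambda>t. U (lam * exp (l * t))) t" by simp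
      have "\<not> isCont U (lam * exp (l * t))"
      proof
        assume "isCont U (lam * exp (l * t))"
        then have "isCont (\<lambda>t. U (lam * exp (l * t))) t"
          by (intro continuous_intros isCont_o2[where f="\<lambda>t. lam * exp (l * t)" and g=U]) auto
        then show False using nc by simp
      qed
      moreover have "ginv (lam * exp (l * t)) = t" using False by (simp add: ginv_def)
      ultimately show "t \<in> ginv ` {a. \<not> isCont U a}" by (metis (mono_tags, lifting) image_eqI mem_Collect_eq)
    qed
    then show ?thesis using countable_subset cU by blast
  qed
qed

context LS begin

lemma interior_case:
  assumes Dne: "D \<noteq> {}" and sl: "0 < \<sigma> * l" and lam0: "Fm l lam0 \<le> X" "X \<le> Fp l lam0"
  shows "\<exists>\<gamma>. admissible C \<gamma> \<and> \<gamma> 0 = (0,1) \<and> \<gamma> 1 = (X, exp l) \<and>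
     (\<forall>\<eta>. admissible C \<eta> \<and> \<eta> 0 = (0,1) \<and> \<eta> 1 = (X, exp l) \<longrightarrow> path_length \<nu> \<eta> \<le> path_length \<nu> \<gamma>)"
proof -
  define P where "P t = (\<sigma> * l) * exp (l * t) * Up (lam0 * exp (l * t))" for t
  define Q where "Q t = (\<sigma> * l) * exp (l * t) * Um (lam0 * exp (l * t))" for t
  have Pi: "P integrable_on {a..b}" for a b unfolding P_def by (rule intUp[OF Dne])
  have Qi: "Q integrable_on {a..b}" for a b unfolding Q_def by (rule intUm[OF Dne])
  define Xt where "Xt \<tau> = integral {0..\<tau>} P + (integral {0..1} Q - integral {0..\<tau>} Q)" for \<tau>
  have Xt_eq: "Xt \<tau> = integral {0..\<tau>} P + integral {\<tau>..1} Q" if "\<tau> \<in> {0..1}" for \<tau>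
    using Henstock_Kurzweil_Integration.integral_combine[where f=Q and a=0 and c=\<tau> and b=1] that Qi by (simp add: Xt_def)
  have Xt0: "Xt 0 = Fm l lam0" by (simp add: Xt_def Fm_def Q_def[abs_def])
  have Xt1: "Xt 1 = Fp l lam0" by (simp add: Xt_def Fp_def P_def[abs_def])
  have Xtc: "continuous_on {0..1} Xt"
    unfolding Xt_def by (intro continuous_intros indefinite_integral_continuous_1 Pi Qi)
  obtain \<tau> where \<tau>: "0 \<le> \<tau>" "\<tau> \<le> 1" "Xt \<tau> = X"
    using IVT'[of Xt 0 X 1] lam0 Xt0 Xt1 Xtc by auto
  define us where "us t = (if t \<le> \<tau> then Up (lam0 * exp (l * t)) else Um (lam0 * exp (l * t)))" for t
  define f where "f t = (\<sigma> * l) * exp (l * t) * us t" for t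
  have fP: "f t = P t" if "t \<le> \<tau>" for t using that by (simp add: f_def us_def P_def)
  have fQ: "f t = Q t" if "\<tau> < t" for t using that by (simp add: f_def us_def Q_def)
  have f1: "f integrable_on {0..\<tau>}"
    by (rule integrable_eq[where f=P, OF Pi]) (use fP in auto)
  have f2: "(f has_integral integral {\<tau>..1} Q) {\<tau>..1}"
    by (rule has_integral_spike_finite[where S="{\<tau>}" and f=Q, OF _ _ integrable_integral[OF Qi]]) (use fQ in auto)
  have fint: "f integrable_on {0..1}"
    using Henstock_Kurzweil_Integration.integrable_combine[OF \<tau>(1,2) f1 has_integral_integrable[OF f2]] by simp
  have fsub: "f integrable_on {a..b}" if "{a..b} \<subseteq> {0..1}" for a b
    using integrable_subinterval_real[OF fint that] .
  define xs where "xs t = integral {0..t} f" for t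
  define \<gamma> where "\<gamma> t = (xs t, exp (l * t))" for t
  have x1: "xs 1 = X"
  proof -
    have "integral {0..\<tau>} f = integral {0..\<tau>} P"
      by (rule integral_cong) (use fP in auto)
    moreover have "integral {\<tau>..1} f = integral {\<tau>..1} Q" using f2 by (rule integral_unique)
    moreover have "xs 1 = integral {0..\<tau>} f + integral {\<tau>..1} f"
      unfolding xs_def using Henstock_Kurzweil_Integration.integral_combine[OF \<tau>(1,2) fint] by simp
    ultimately show ?thesis using Xt_eq[of \<tau>] \<tau> by simp
  qed
  have g0: "\<gamma> 0 = (0,1)" by (simp add: \<gamma>_def xs_def)
  have g1: "\<gamma> 1 = (X, exp l)" by (simp add: \<gamma>_def x1)
  obtain R where R: "0 \<le> R" "\<And>u. u \<in> D \<Longrightarrow> \<bar>u\<bar> \<le> R" using D_R by blast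
  have usD: "us t \<in> D" for t using U_D[OF Dne] by (simp add: us_def)
  have usA: "us t \<in> A (lam0 * exp (l * t))" for t using Up_in[OF Dne] Um_in[OF Dne] by (simp add: us_def)
  define W where "W = \<bar>\<sigma> * l\<bar> * exp \<bar>l\<bar> * R"
  have fb: "norm (f t) \<le> W" if "t \<in> {0..1}" for t
  proof -
    have "norm (f t) = \<bar>\<sigma> * l\<bar> * exp (l * t) * \<bar>us t\<bar>" by (simp add: f_def abs_mult)
    also have "\<dots> \<le> \<bar>\<sigma> * l\<bar> * exp \<bar>l\<bar> * R"
      using exp_le_abs[OF that, of l] R(2)[OF usD] R(1) by (intro mult_mono mult_left_mono) auto
    finally show ?thesis by (simp add: W_def)
  qed
  have W0: "0 \<le> W" using R(1) by (simp add: W_def)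
  have xlip: "W-lipschitz_on {0..1} xs"
  proof (rule lipschitz_onI[OF _ W0])
    have *: "dist (xs s) (xs t) \<le> W * dist s t" if st: "s \<in> {0..1}" "t \<in> {0..1}" "s \<le> t" for s t
    proof -
      have "xs t = xs s + integral {s..t} f"
        unfolding xs_def using Henstock_Kurzweil_Integration.integral_combine[where f=f and a=0 and c=s and b=t] st fsub[of 0 t] by auto
      moreover have sub: "{s..t} \<subseteq> {0..1}" using st by auto
      moreover have "norm (integral {s..t} f) \<le> W * Henstock_Kurzweil_Integration.content {s..t}"
        by (rule has_integral_bound_real[OF W0 finite.emptyI integrable_integral[OF fsub[OF sub]]]) (use st fb in auto)
      ultimately show ?thesis using st by (simp add: dist_real_def abs_minus_commute)
    qed
    fix s t :: real assume "s \<in> {0..1}" "t \<in> {0..1}"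
    then show "dist (xs s) (xs t) \<le> W * dist s t"
      using *[of s t] *[of t s] by (cases "s \<le> t") (auto simp: dist_commute)
  qed
  have ylip: "(\<bar>l\<bar> * exp \<bar>l\<bar>)-lipschitz_on {0..1} (\<lambda>t. exp (l * t))"
  proof (rule deriv_lip[where f'="\<lambda>t. l * exp (l * t)"])
    fix t :: real assume t: "t \<in> {0..1}"
    show "((\<lambda>t. exp (l * t)) has_real_derivative l * exp (l * t)) (at t)"
      by (auto intro!: derivative_eq_intros)
    show "\<bar>l * exp (l * t)\<bar> \<le> \<bar>l\<bar> * exp \<bar>l\<bar>"
      using exp_le_abs[OF t, of l] by (simp add: abs_mult mult_left_mono)
  qed simp
  have glip: "\<exists>L. L-lipschitz_on {0..1} \<gamma>"
    unfolding \<gamma>_def using lipschitz_on_Pair[OF xlip ylip] by blast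
  define Bd where "Bd = {\<tau>, 0, 1} \<union> {t. \<not> isCont (\<lambda>t. Up (lam0 * exp (l * t))) t}
        \<union> {t. \<not> isCont (\<lambda>t. Um (lam0 * exp (l * t))) t}"
  have Bdc: "countable Bd"
    unfolding Bd_def using anti_disc_countable[OF Up_anti'[OF Dne]] anti_disc_countable[OF Um_anti'[OF Dne]]
    by auto
  then have Bdn: "Bd \<in> null_sets lebesgue" using countable_negl negligible_iff_null_sets by blast
  have good: "(\<gamma> has_vector_derivative (f t, l * exp (l * t))) (at t)" if t: "t \<in> {0..1}" "t \<notin> Bd" for t
  proof -
    have tin: "t \<in> {0<..<1}" using t by (auto simp: Bd_def)
    have fc: "isCont f t"
    proof (cases "t < \<tau>")
      case True
      have "isCont P t"
        unfolding P_def using t by (intro continuous_intros) (auto simp: Bd_def)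
      then have "continuous (at t within UNIV) f"
        by (rule continuous_transform_within[where \<delta>="\<tau> - t"])
           (use True fP in \<open>auto simp: dist_real_def abs_less_iff\<close>)
      then show ?thesis by simp
    next
      case False
      then have tg: "\<tau> < t" using t by (cases "t = \<tau>") (auto simp: Bd_def)
      have "isCont Q t"
        unfolding Q_def using t by (intro continuous_intros) (auto simp: Bd_def)
      then have "continuous (at t within UNIV) f"
        by (rule continuous_transform_within[where \<delta>="t - \<tau>"])
           (use tg fQ in \<open>auto simp: dist_real_def abs_less_iff\<close>)
      then show ?thesis by simp
    qed
    have "(xs has_vector_derivative f t) (at t within {0..1} - {})"
      unfolding xs_def
      by (rule integral_has_vector_derivative_continuous_at[OF fint]) (use t fc in \<open>auto intro: continuous_at_imp_continuous_within\<close>)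
    moreover have "at t within {0..1} - {} = at t" using tin by (intro at_within_interior) auto
    ultimately have dx: "(xs has_vector_derivative f t) (at t)" by simp
    have dy: "((\<lambda>t. exp (l * t)) has_vector_derivative l * exp (l * t)) (at t)"
      unfolding has_real_derivative_iff_has_vector_derivative[symmetric]
      by (auto intro!: derivative_eq_intros)
    show ?thesis unfolding \<gamma>_def by (rule has_vector_derivative_Pair[OF dx dy])
  qed
  define \<zeta> where "\<zeta> t = (\<sigma> * l) *\<^sub>R (us t, \<sigma>)" for t
  have zC: "\<zeta> t \<in> C" for t unfolding \<zeta>_def using D_mem[OF usD] sl by auto
  have veq: "(f t, l * exp (l * t)) = exp (l * t) *\<^sub>R \<zeta> t" for t
    using sig2 by (simp add: f_def \<zeta>_def algebra_simps)
  have adm: "admissible C \<gamma>"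
    unfolding admissible_def
  proof (intro conjI glip)
    show "\<forall>t\<in>{0..1}. \<gamma> t \<in> G_set" by (simp add: \<gamma>_def G_set_def)
    show "AE t in lebesgue. t \<in> {0..1} \<longrightarrow> \<gamma> differentiable at t \<and> vector_derivative \<gamma> (at t) \<in> cone_at C (\<gamma> t)"
    proof (rule AE_I'[OF Bdn], rule subsetI, rule ccontr)
      fix t assume t: "t \<in> {t \<in> space lebesgue. \<not> (t \<in> {0..1} \<longrightarrow> \<gamma> differentiable at t \<and> vector_derivative \<gamma> (at t) \<in> cone_at C (\<gamma> t))}" "t \<notin> Bd"
      then have t01: "t \<in> {0..1}" by auto
      have d: "(\<gamma> has_vector_derivative (f t, l * exp (l * t))) (at t)" using good t01 t(2) .
      then have "vector_derivative \<gamma> (at t) = exp (l * t) *\<^sub>R \<zeta> t" using vector_derivative_at veq by metis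
      moreover have "\<gamma> differentiable at t" using d differentiableI_vector by blast
      moreover have "exp (l * t) *\<^sub>R \<zeta> t \<in> cone_at C (\<gamma> t)"
        using zC[of t] unfolding cone_at_def \<gamma>_def snd_conv by blast
      ultimately show False using t(1) t01 by auto
    qed
  qed
  have maxc: "AE t in lebesgue. t \<in> {0..1} \<longrightarrow> (0 < \<sigma> * snd (xi \<gamma> t) \<longrightarrow>
            fst (xi \<gamma> t) / (\<sigma> * snd (xi \<gamma> t)) \<in> A (lam0 * snd (\<gamma> t)))"
  proof (rule AE_I'[OF Bdn], rule subsetI, rule ccontr)
    fix t assume t: "t \<in> {t \<in> space lebesgue. \<not> (t \<in> {0..1} \<longrightarrow> (0 < \<sigma> * snd (xi \<gamma> t) \<longrightarrow>
            fst (xi \<gamma> t) / (\<sigma> * snd (xi \<gamma> t)) \<in> A (lam0 * snd (\<gamma> t))))}" "t \<notin> Bd"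
    then have t01: "t \<in> {0..1}" by auto
    have d: "(\<gamma> has_vector_derivative (f t, l * exp (l * t))) (at t)" using good t01 t(2) .
    then have "vector_derivative \<gamma> (at t) = exp (l * t) *\<^sub>R \<zeta> t" using vector_derivative_at veq by metis
    then have xe: "xi \<gamma> t = \<zeta> t" by (simp add: xi_def \<gamma>_def)
    have s1: "\<sigma> * snd (\<zeta> t) = \<sigma> * l" using sig2 by (simp add: \<zeta>_def algebra_simps)
    have f1: "fst (\<zeta> t) = (\<sigma> * l) * us t" by (simp add: \<zeta>_def)
    have "fst (\<zeta> t) / (\<sigma> * snd (\<zeta> t)) = (\<sigma> * l) * us t / (\<sigma> * l)" by (simp only: f1 s1)
    also have "\<dots> = us t" using sl by (intro nonzero_mult_div_cancel_left) (metis less_irrefl)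
    finally have "fst (\<zeta> t) / (\<sigma> * snd (\<zeta> t)) = us t" .
    then have "fst (xi \<gamma> t) / (\<sigma> * snd (xi \<gamma> t)) \<in> A (lam0 * snd (\<gamma> t))"
      using xe usA by (simp add: \<gamma>_def)
    then show False using t(1) t01 by auto
  qed
  have eqv: "path_length \<nu> \<gamma> = ennreal (HH lam0 (\<sigma> * ln (exp l)) - HH lam0 0 + lam0 * X)"
    by (rule cal_path(2)[OF Dne adm g0 g1 maxc])
  show ?thesis
  proof (intro exI[of _ \<gamma>] conjI adm g0 g1 allI impI)
    fix \<eta> assume "admissible C \<eta> \<and> \<eta> 0 = (0, 1) \<and> \<eta> 1 = (X, exp l)"
    then have "path_length \<nu> \<eta> \<le> ennreal (HH lam0 (\<sigma> * ln (exp l)) - HH lam0 0 + lam0 * X)"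
      using cal_path(1)[OF Dne] by blast
    then show "path_length \<nu> \<eta> \<le> path_length \<nu> \<gamma>" using eqv by simp
  qed
qed

end

lemma cone_sign:
  assumes pc: "pointed_cone C" and hor: "C \<inter> {(a, 0) | a. True} = {0}"
  shows "(\<forall>\<xi>\<in>C. 0 \<le> snd \<xi>) \<or> (\<forall>\<xi>\<in>C. snd \<xi> \<le> (0::real))"
proof (rule ccontr)
  assume "\<not> ?thesis"
  then obtain \<xi> \<eta> where x: "\<xi> \<in> C" "snd \<xi> < 0" and y: "\<eta> \<in> C" "0 < snd \<eta>"
    by (auto simp: not_le)
  have cv: "convex C" and cn: "cone C" and pt: "\<And>v. v \<in> C \<Longrightarrow> - v \<in> C \<Longrightarrow> v = 0"
    using pc by (auto simp: pointed_cone_def)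
  have sc: "c *\<^sub>R v \<in> C" if "v \<in> C" "0 \<le> c" for v c using cn that by (auto simp: cone_def)
  have ad: "u + v \<in> C" if "u \<in> C" "v \<in> C" for u v
  proof -
    have "(1/2) *\<^sub>R u + (1/2) *\<^sub>R v \<in> C" using cv that by (auto simp: convex_def)
    then have "2 *\<^sub>R ((1/2) *\<^sub>R u + (1/2) *\<^sub>R v) \<in> C" by (rule sc) auto
    then show ?thesis by (simp add: scaleR_add_right)
  qed
  define \<zeta> where "\<zeta> = (snd \<eta>) *\<^sub>R \<xi> + (- snd \<xi>) *\<^sub>R \<eta>"
  have zC: "\<zeta> \<in> C" unfolding \<zeta>_def using x y by (intro ad sc) auto
  have "snd \<zeta> = 0" by (simp add: \<zeta>_def algebra_simps)
  then have "\<zeta> = 0" using hor zC by (cases \<zeta>) auto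
  then have e: "(snd \<eta>) *\<^sub>R \<xi> = (snd \<xi>) *\<^sub>R \<eta>" by (simp add: \<zeta>_def algebra_simps)
  define c where "c = snd \<eta> / (- snd \<xi>)"
  have c0: "0 < c" using x y by (simp add: c_def divide_neg_pos divide_pos_neg)
  have "- \<eta> = c *\<^sub>R \<xi>"
  proof -
    have "(snd \<xi>) *\<^sub>R (- \<eta>) = (snd \<xi>) *\<^sub>R (c *\<^sub>R \<xi>)"
      using e x by (simp add: c_def scaleR_scaleR)
    then show ?thesis using x(2) by (subst (asm) scaleR_cancel_left) auto
  qed
  then have "- \<eta> \<in> C" using sc[OF x(1)] c0 by simp
  then have "\<eta> = 0" using pt y(1) by simp
  then show False using y by simp
qed


lemma zero_length:
  assumes adm: "admissible C \<gamma>" and ae: "AE t in lebesgue. t \<in> {0..1} \<longrightarrow> nu_at \<nu> (\<gamma> t) (vector_derivative \<gamma> (at t)) = 0"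
  shows "path_length \<nu> \<gamma> = 0"
proof -
  have "(\<integral>\<^sup>+t. e2ennreal (nu_at \<nu> (\<gamma> t) (vector_derivative \<gamma> (at t))) \<partial>lebesgue_on {0..1}) = ennreal ((\<lambda>_. 0::real) 1 - (\<lambda>_. 0) 0)"
    by (rule CAL_gen(2)[where L=0 and G="\<lambda>_. 0" and G'="\<lambda>_. 0"])
       (use ae in \<open>auto intro: lipschitz_onI elim!: eventually_mono simp: zero_ereal_def\<close>)
  then show ?thesis by (simp add: path_length_def)
qed

theorem mainTheorem8:
  fixes C :: "(real \<times> real) set" and \<nu> :: "real \<times> real \<Rightarrow> ereal"
  assumes "pointed_cone C"
    and "anti_norm C \<nu>"
    and "C \<inter> {(a, 0) | a. True} = {0}"
    and "admissible C \<gamma>0" and "\<gamma>0 0 = G_id" and "\<gamma>0 1 = p"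
  shows "\<exists>\<gamma>. longest_path C \<nu> G_id p \<gamma>"
proof -
  note pc = assms(1) and an = assms(2) and hor = assms(3) and adm0 = assms(4)
  obtain \<sigma> :: real where sig: "\<sigma> = 1 \<or> \<sigma> = -1" and sgn: "\<And>\<xi>. \<xi> \<in> C \<Longrightarrow> 0 \<le> \<sigma> * snd \<xi>"
  proof (cases "\<forall>\<xi>\<in>C. 0 \<le> snd \<xi>")
    case True then show ?thesis using that[of 1] by auto
  next
    case False
    then have "\<forall>\<xi>\<in>C. snd \<xi> \<le> 0" using cone_sign[OF pc hor] by auto
    then show ?thesis using that[of "-1"] by auto
  qed
  interpret LS C \<nu> \<sigma> using pc an hor sig sgn by unfold_locales auto
  obtain X Y where p: "p = (X, Y)" by (cases p)
  have g0: "\<gamma>0 0 = (0, 1)" using assms(5) by (simp add: G_id_def)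
  have g1: "\<gamma>0 1 = (X, Y)" using assms(6) p by simp
  have Gid: "G_id = (0, 1)" by (simp add: G_id_def)
  have suff: "\<exists>\<gamma>. longest_path C \<nu> G_id p \<gamma>"
    if "admissible C \<gamma>" "\<gamma> 0 = (0,1)" "\<gamma> 1 = (X, Y)"
       "\<And>\<eta>. admissible C \<eta> \<Longrightarrow> \<eta> 0 = (0,1) \<Longrightarrow> \<eta> 1 = (X, Y) \<Longrightarrow> path_length \<nu> \<eta> \<le> path_length \<nu> \<gamma>"
    for \<gamma>
    using that by (auto simp: longest_path_def Gid p intro!: exI[of _ \<gamma>])
  show ?thesis
  proof (cases "D = {}")
    case True
    have z: "path_length \<nu> \<eta> = 0" if "admissible C \<eta>" for \<eta>
    proof (rule zero_length[OF that])
      show "AE t in lebesgue. t \<in> {0..1} \<longrightarrow> nu_at \<nu> (\<eta> t) (vector_derivative \<eta> (at t)) = 0"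
        using adm_AE[OF that, of \<nu>]
      proof eventually_elim
        case (elim t)
        show ?case
        proof
          assume t: "t \<in> {0..1}"
          then have xC: "xi \<eta> t \<in> C" and e: "nu_at \<nu> (\<eta> t) (vector_derivative \<eta> (at t)) = \<nu> (xi \<eta> t)"
            using elim by auto
          have "xi \<eta> t = 0"
          proof (cases rule: xi_decomp_facts[OF xC])
            case 1 then show ?thesis by simp
          next
            case (2 u) then show ?thesis using True by simp
          qed
          then show "nu_at \<nu> (\<eta> t) (vector_derivative \<eta> (at t)) = 0" using e nu_zero by simp
        qed
      qed
    qed
    show ?thesis by (rule suff[OF adm0 g0 g1]) (simp add: z adm0)
  next
    case False
    note Dne = False
    define a where "a = Inf D"
    define b where "b = Sup D"
    have aD: "a \<in> D" and bD: "b \<in> D" using D_inf_sup Dne by (auto simp: a_def b_def)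
    have ea: "0 \<le> 1 * (u - a)" if "u \<in> D" for u using D_inf_sup(3)[OF that] by (simp add: a_def)
    have eb: "0 \<le> (-1) * (u - b)" if "u \<in> D" for u using D_inf_sup(4)[OF that] by (simp add: b_def)
    define I where "I = \<sigma> * (Y - 1)"
    have aX: "a * I \<le> X" using endpoint(1)[OF Dne adm0 g0 g1 aD _ ea] by (simp add: I_def algebra_simps)
    have Xb: "X \<le> b * I" using endpoint(1)[OF Dne adm0 g0 g1 bD _ eb] by (simp add: I_def algebra_simps)
    show ?thesis
    proof (cases "X = a * I \<or> X = b * I")
      case True
      then obtain c \<epsilon> where c: "c \<in> D" "\<epsilon> = 1 \<or> \<epsilon> = -1" "\<And>u. u \<in> D \<Longrightarrow> 0 \<le> \<epsilon> * (u - c)"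
        "X = c * \<sigma> * (Y - 1)"
      proof -
        from True show ?thesis
        proof
          assume h: "X = a * I"
          show ?thesis
          proof (rule that[of a 1])
            show "X = a * \<sigma> * (Y - 1)" using h by (simp add: I_def mult.assoc)
          qed (use aD ea in auto)
        next
          assume h: "X = b * I"
          show ?thesis
          proof (rule that[of b "-1"])
            show "X = b * \<sigma> * (Y - 1)" using h by (simp add: I_def mult.assoc)
          qed (use bD eb in auto)
        qed
      qed
      have eq: "path_length \<nu> \<eta> = ennreal (\<phi> c * (\<sigma> * ln Y))"
        if "admissible C \<eta>" "\<eta> 0 = (0,1)" "\<eta> 1 = (X, Y)" for \<eta>
        using endpoint(2)[OF Dne that c] .
      show ?thesis by (rule suff[OF adm0 g0 g1]) (simp add: eq adm0 g0 g1)
    next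
      case False
      then have aX': "a * I < X" and Xb': "X < b * I" using aX Xb by auto
      have Yp: "0 < Y" using adm_pos[OF adm0, of 1] g1 by simp
      define l where "l = ln Y"
      have el: "exp l = Y" using Yp by (simp add: l_def)
      have Ip: "0 < I"
      proof (rule ccontr)
        assume "\<not> 0 < I"
        moreover have "a \<le> b" using D_inf_sup(4)[OF aD] by (simp add: b_def)
        ultimately have "b * I \<le> a * I" by (simp add: mult_right_mono_neg)
        then show False using aX' Xb' by simp
      qed
      have sl: "0 < \<sigma> * l"
      proof (cases "\<sigma> = 1")
        case True
        then have "1 < Y" using Ip by (simp add: I_def)
        then show ?thesis using True by (simp add: l_def)
      next
        case False
        then have s: "\<sigma> = -1" using sig by auto
        then have "Y < 1" using Ip by (simp add: I_def)
        then have "ln Y < 0" using Yp by simp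
        then show ?thesis using s by (simp add: l_def)
      qed
      have aX2: "Inf D * (\<sigma> * (exp l - 1)) < X" using aX' el by (simp add: a_def I_def)
      have Xb2: "X < Sup D * (\<sigma> * (exp l - 1))" using Xb' el by (simp add: b_def I_def)
      obtain lam0 where lam0: "Fm l lam0 \<le> X" "X \<le> Fp l lam0" using lam_exists[OF Dne sl aX2 Xb2] by blast
      obtain \<gamma> where \<gamma>: "admissible C \<gamma>" "\<gamma> 0 = (0,1)" "\<gamma> 1 = (X, exp l)"
        "\<forall>\<eta>. admissible C \<eta> \<and> \<eta> 0 = (0,1) \<and> \<eta> 1 = (X, exp l) \<longrightarrow> path_length \<nu> \<eta> \<le> path_length \<nu> \<gamma>"
        using interior_case[OF Dne sl lam0] by blast
      show ?thesis by (rule suff[of \<gamma>]) (use \<gamma> el in auto)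
    qed
  qed
qed

end
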